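(* Let $\mathcal T$ be an oscillating tableau of length $r$, and let $Q$ be the standard Young tableau produced from $\mathcal T$ by Sundaram's correspondence (as described in the context). Then $\mathrm{Des}(\mathcal T)=\mathrm{Des}(Q)$.
   Context: An oscillating tableau of length $r$ is a sequence of partitions $(\emptyset=\mu^0,\dots,\mu^r)$ with consecutive Ferrers diagrams (English notation) differing by exactly one box; step $k$ is an expansion or contraction according as the box $b_k$ is added or removed. $\mathrm{Des}(\mathcal T)$ is the set of $k\in\{1,\dots,r-1\}$ such that (i) step $k$ is an expansion and step $k+1$ a contraction, or (ii) both are expansions and $b_k$ is in a row strictly above $b_{k+1}$, or (iii) both are contractions and $b_k$ is in a row strictly below $b_{k+1}$. A partial Young tableau is a filling of a Ferrers shape by distinct positive integers increasing along rows and down columns; its descent set is $\{k: k,k+1 \text{ are entries and } k+1 \text{ lies in a row strictly below } k\}$. Column insertion of $x$ into a partial tableau: insert $x$ into the first column; if $x$ exceeds all entries of the column it is placed at the bottom of it, otherwise it replaces the smallest entry larger than $x$, and the replaced entry is inserted in the same way into the next column, and so on. Column deletion of the entry $y$ in a corner box lying in column $j$: remove it, then for the columns $j-1,j-2,\dots,1$ in turn replace the largest entry smaller than the current $y$ by $y$ and let $y$ be the replaced entry; the final $y$ is the output $x$. Sundaram's correspondence: (1) Set $\iota_0=\emptyset$, $T_0=\emptyset$. For $k=1,\dots,r$: if step $k$ is an expansion, $\iota_k=\iota_{k-1}$ and $T_k$ is $T_{k-1}$ with $k$ placed in box $b_k$; if step $k$ is a contraction, column-delete the entry of box $b_k$ from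 $T_{k-1}$, obtaining output $x$ and tableau $T_k$, and let $\iota_k$ be $\iota_{k-1}$ with the transposition $(x,k)$ adjoined. Let $\iota=\iota_r$ (a fixed-point-free involution on a set $A\subseteq\{1,\dots,r\}$) and $T=T_r$ (a partial tableau with entry set $\{1,\dots,r\}\setminus A$). (2) Writing $A=\{a_1<\dots<a_m\}$, let $I$ be the Robinson–Schensted (row) insertion tableau of the word $\iota(a_1)\iota(a_2)\cdots\iota(a_m)$. (3) Let the reverse reading word of $I$ be the word obtained by reading the rows of $I$ from top to bottom, each row from right to left. $Q$ is the tableau obtained by column inserting the letters of this word, in order, into $T$; it is a standard Young tableau with $r$ boxes. *)

theory Defs
  imports Main
begin

text \<open>A partition is a weakly decreasing list of positive integers (its parts).
  Boxes are pairs (row, column), 0-indexed, English notation: row 0 is the top row.\<close>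

definition is_partition :: "nat list \<Rightarrow> bool" where
  "is_partition lam \<longleftrightarrow> sorted_wrt (\<ge>) lam \<and> (\<forall>p\<in>set lam. 0 < p)"

definition diagram :: "nat list \<Rightarrow> (nat \<times> nat) set" where
  "diagram lam = {(i, j). i < length lam \<and> j < lam ! i}"

definition symdiff :: "'a set \<Rightarrow> 'a set \<Rightarrow> 'a set" where
  "symdiff A B = (A - B) \<union> (B - A)"

definition osc_tableau :: "nat \<Rightarrow> nat list list \<Rightarrow> bool" where
  "osc_tableau r mus \<longleftrightarrow> length mus = Suc r \<and> mus ! 0 = [] \<and>
     (\<forall>mu\<in>set mus. is_partition mu) \<and>
     (\<forall>k<r. card (symdiff (diagram (mus ! k)) (diagram (mus ! Suc k))) = 1)"

text \<open>Step k (1 \<le> k \<le> r): the box b_k, and whether it is an expansion.\<close>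
definition step_box :: "nat list list \<Rightarrow> nat \<Rightarrow> nat \<times> nat" where
  "step_box mus k = the_elem (symdiff (diagram (mus ! (k - 1))) (diagram (mus ! k)))"

definition is_exp :: "nat list list \<Rightarrow> nat \<Rightarrow> bool" where
  "is_exp mus k \<longleftrightarrow> diagram (mus ! (k - 1)) \<subset> diagram (mus ! k)"

definition osc_Des :: "nat list list \<Rightarrow> nat set" where
  "osc_Des mus = {k. 1 \<le> k \<and> k < length mus - 1 \<and>
     ((is_exp mus k \<and> \<not> is_exp mus (Suc k)) \<or>
      (is_exp mus k \<and> is_exp mus (Suc k) \<and> fst (step_box mus k) < fst (step_box mus (Suc k))) \<or>
      (\<not> is_exp mus k \<and> \<not> is_exp mus (Suc k) \<and> fst (step_box mus k) > fst (step_box mus (Suc k))))}"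

text \<open>A partial tableau is represented by its list of columns (left to right), each column
  listed from top to bottom; the entry in box (i, j) (row i, column j) is T ! j ! i.\<close>

definition tab_entries :: "nat list list \<Rightarrow> nat set" where
  "tab_entries T = (\<Union>c\<in>set T. set c)"

definition tab_row :: "nat list list \<Rightarrow> nat \<Rightarrow> nat" where
  "tab_row T v = (THE i. \<exists>j<length T. i < length (T ! j) \<and> T ! j ! i = v)"

definition tab_Des :: "nat list list \<Rightarrow> nat set" where
  "tab_Des T = {k. k \<in> tab_entries T \<and> Suc k \<in> tab_entries T \<and> tab_row T k < tab_row T (Suc k)}"

fun col_ins :: "nat \<Rightarrow> nat list list \<Rightarrow> nat list list" where
  "col_ins x [] = [[x]]"
| "col_ins x (c # cs) =
     (if \<forall>v\<in>set c. v < x then (c @ [x]) # cs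
      else (let z = Min {v \<in> set c. x < v}
            in map (\<lambda>v. if v = z then x else v) c # col_ins z cs))"

text \<open>Row (Robinson--Schensted) insertion of x into a tableau given as list of rows.\<close>
fun row_ins :: "nat \<Rightarrow> nat list list \<Rightarrow> nat list list" where
  "row_ins x [] = [[x]]"
| "row_ins x (r # rs) =
     (if \<forall>v\<in>set r. v < x then (r @ [x]) # rs
      else (let z = Min {v \<in> set r. x < v}
            in map (\<lambda>v. if v = z then x else v) r # row_ins z rs))"

text \<open>Backward bumping through columns given in right-to-left order (columns j-1, ..., 1).\<close>
fun bump_left :: "nat \<Rightarrow> nat list list \<Rightarrow> nat \<times> nat list list" where
  "bump_left y [] = (y, [])"
| "bump_left y (c # cs) =
     (let z = Max {v \<in> set c. v < y};
          (x, cs') = bump_left z cs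
      in (x, map (\<lambda>v. if v = z then y else v) c # cs'))"

definition col_del :: "nat list list \<Rightarrow> nat \<times> nat \<Rightarrow> nat \<times> nat list list" where
  "col_del T b = (case b of (i, j) \<Rightarrow>
     (let y = T ! j ! i;
          cj = take i (T ! j) @ drop (Suc i) (T ! j);
          (x, ls) = bump_left y (rev (take j T))
      in (x, rev ls @ cj # drop (Suc j) T)))"

definition place :: "nat list list \<Rightarrow> nat \<times> nat \<Rightarrow> nat \<Rightarrow> nat list list" where
  "place T b k = (case b of (i, j) \<Rightarrow>
     (let T' = T @ replicate (Suc j - length T) [];
          c = T' ! j
      in T'[j := take i c @ [k] @ drop (Suc i) c]))"

text \<open>The involution iota is recorded as the set of its transpositions (x, k).\<close>
definition inv_partner :: "(nat \<times> nat) set \<Rightarrow> nat \<Rightarrow> nat" where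
  "inv_partner P a = (THE b. (a, b) \<in> P \<or> (b, a) \<in> P)"

definition inv_support :: "(nat \<times> nat) set \<Rightarrow> nat set" where
  "inv_support P = fst ` P \<union> snd ` P"

definition sundaram_step ::
  "nat list list \<Rightarrow> (nat \<times> nat) set \<times> nat list list \<Rightarrow> nat \<Rightarrow> (nat \<times> nat) set \<times> nat list list" where
  "sundaram_step mus st k = (case st of (P, T) \<Rightarrow>
     (if is_exp mus k then (P, place T (step_box mus k) k)
      else (case col_del T (step_box mus k) of (x, T') \<Rightarrow> (insert (x, k) P, T'))))"

definition sundaram_part1 :: "nat list list \<Rightarrow> (nat \<times> nat) set \<times> nat list list" where
  "sundaram_part1 mus = foldl (sundaram_step mus) ({}, []) [1..<length mus]"

definition sundaram_Q :: "nat list list \<Rightarrow> nat list list" where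
  "sundaram_Q mus = (case sundaram_part1 mus of (P, T) \<Rightarrow>
     (let w = map (inv_partner P) (sorted_list_of_set (inv_support P));
          I = foldl (\<lambda>R x. row_ins x R) [] w;
          rrw = concat (map rev I)
      in foldl (\<lambda>S x. col_ins x S) T rrw))"

end

theory Submission
  imports Defs
begin


abbreviation ent :: "nat list list \<Rightarrow> nat set" where "ent T \<equiv> tab_entries T"

fun colx :: "nat \<Rightarrow> nat list list \<Rightarrow> nat" where
  "colx v [] = 0"
| "colx v (c # cs) = (if v \<in> set c then 0 else Suc (colx v cs))"

lemma ent_Nil[simp]: "ent [] = {}" by (simp add: tab_entries_def)
lemma ent_Cons[simp]: "ent (c # cs) = set c \<union> ent cs" by (simp add: tab_entries_def)
lemma ent_append[simp]: "ent (xs @ ys) = ent xs \<union> ent ys" by (simp add: tab_entries_def)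
lemma ent_concat: "ent T = set (concat T)" by (simp add: tab_entries_def)
lemma finite_ent[simp]: "finite (ent T)" by (simp add: tab_entries_def)

lemma colx_nth:
  assumes "distinct (concat L)" "c < length L" "v \<in> set (L ! c)"
  shows "colx v L = c"
  using assms
proof (induction L arbitrary: c)
  case Nil then show ?case by simp
next
  case (Cons a L)
  show ?case
  proof (cases c)
    case 0 then show ?thesis using Cons by simp
  next
    case (Suc c')
    have "v \<in> ent L" using Cons Suc by (auto simp: tab_entries_def)
    hence "v \<notin> set a" using Cons.prems(1) by (auto simp: tab_entries_def)
    then show ?thesis using Cons Suc by simp
  qed
qed

lemma colx_bound: "v \<in> ent L \<Longrightarrow> colx v L < length L \<and> v \<in> set (L ! colx v L)"
  by (induction L) auto

definition repl :: "nat \<Rightarrow> nat \<Rightarrow> nat list \<Rightarrow> nat list" where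
  "repl z x c = map (\<lambda>v. if v = z then x else v) c"

lemma set_repl: "z \<in> set c \<Longrightarrow> set (repl z x c) = insert x (set c - {z})"
  by (auto simp: repl_def)

lemma distinct_repl: "distinct c \<Longrightarrow> x \<notin> set c \<Longrightarrow> distinct (repl z x c)"
  unfolding repl_def by (induction c) auto

lemma length_repl[simp]: "length (repl z x c) = length c" by (simp add: repl_def)

lemma sorted_repl:
  assumes "sorted_wrt (<) c" "x \<notin> set c" "\<And>v. v \<in> set c \<Longrightarrow> v \<noteq> z \<Longrightarrow> (v < z \<longleftrightarrow> v < x)"
    "z \<in> set c"
  shows "sorted_wrt (<) (repl z x c)"
proof -
  have d: "distinct c" using assms(1) strict_sorted_iff by blast
  show ?thesis unfolding sorted_wrt_iff_nth_less repl_def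
  proof (intro allI impI)
    fix i j assume ij: "i < j" "j < length (map (\<lambda>v. if v = z then x else v) c)"
    hence jl: "j < length c" by simp
    have lt: "c ! i < c ! j" using assms(1) ij jl by (simp add: sorted_wrt_iff_nth_less)
    have ne: "c ! i \<noteq> c ! j" using lt by simp
    have ci: "c!i \<in> set c" "c!j \<in> set c" using ij jl by auto
    have h1: "c!i \<noteq> z \<Longrightarrow> (c!i < z \<longleftrightarrow> c!i < x)" using assms(3) ci(1) by blast
    have h2: "c!j \<noteq> z \<Longrightarrow> (c!j < z \<longleftrightarrow> c!j < x)" using assms(3) ci(2) by blast
    have h3: "c!i \<noteq> x" "c!j \<noteq> x" using assms(2) ci by auto
    show "map (\<lambda>v. if v = z then x else v) c ! i < map (\<lambda>v. if v = z then x else v) c ! j"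
      using ij jl lt ne h1 h2 h3 by (auto simp: nth_map)
  qed
qed

section \<open>Column insertion\<close>

lemma row_ins_eq: "row_ins = col_ins"
proof (intro ext)
  fix x L show "row_ins x L = col_ins x L"
    by (induction x L rule: row_ins.induct) (simp_all add: Let_def)
qed

lemma col_ins_Cons_app: "\<forall>v\<in>set c. v < x \<Longrightarrow> col_ins x (c # cs) = (c @ [x]) # cs" by simp

lemma col_ins_Cons_bump: "\<not> (\<forall>v\<in>set c. v < x) \<Longrightarrow>
  col_ins x (c # cs) = repl (Min {v \<in> set c. x < v}) x c # col_ins (Min {v \<in> set c. x < v}) cs"
  by (simp add: repl_def Let_def)

lemma Min_gt:
  assumes "\<not> (\<forall>v\<in>set c. v < (x::nat))" "x \<notin> set c"
  shows "Min {v \<in> set c. x < v} \<in> set c" "x < Min {v \<in> set c. x < v}"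
    "\<And>v. v \<in> set c \<Longrightarrow> x < v \<Longrightarrow> Min {v \<in> set c. x < v} \<le> v"
proof -
  have ne: "{v \<in> set c. x < v} \<noteq> {}" using assms by (auto simp: not_less order.order_iff_strict)
  have f: "finite {v \<in> set c. x < v}" by simp
  show "Min {v \<in> set c. x < v} \<in> set c" "x < Min {v \<in> set c. x < v}"
    using Min_in[OF f ne] by auto
  show "\<And>v. v \<in> set c \<Longrightarrow> x < v \<Longrightarrow> Min {v \<in> set c. x < v} \<le> v" using f by auto
qed

lemma ent_col_ins: "distinct (concat L) \<Longrightarrow> x \<notin> ent L \<Longrightarrow> ent (col_ins x L) = insert x (ent L)"
proof (induction x L rule: col_ins.induct)
  case (1 x) then show ?case by simp
next
  case (2 x c cs)
  show ?case
  proof (cases "\<forall>v\<in>set c. v < x")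
    case True then show ?thesis by auto
  next
    case False
    define z where "z = Min {v \<in> set c. x < v}"
    have xc: "x \<notin> set c" using 2(3) by simp
    have zc: "z \<in> set c" "x < z"
      using Min_gt[OF False xc] z_def by auto
    have zcs: "z \<notin> ent cs" using 2(2) zc by (auto simp: tab_entries_def)
    have dcs: "distinct (concat cs)" using 2(2) by simp
    have IH: "ent (col_ins z cs) = insert z (ent cs)" using 2(1)[OF False z_def dcs zcs] .
    have "col_ins x (c # cs) = repl z x c # col_ins z cs" using col_ins_Cons_bump[OF False] z_def by simp
    then show ?thesis using IH set_repl[OF zc(1), of x] zc by auto
  qed
qed

lemma Min_gt':
  assumes "\<not> (\<forall>v\<in>set c. v < (x::nat))" "x \<notin> set c"
  defines "z \<equiv> Min {v \<in> set c. x < v}"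
  shows "z \<in> set c \<and> x < z \<and> (\<forall>v\<in>set c. x < v \<longrightarrow> z \<le> v)"
  using Min_gt[OF assms(1,2)] z_def by blast

lemma distinct_col_ins:
  "distinct (concat L) \<Longrightarrow> x \<notin> ent L \<Longrightarrow> distinct (concat (col_ins x L))"
proof (induction x L rule: col_ins.induct)
  case (1 x) then show ?case by simp
next
  case (2 x c cs)
  have xc: "x \<notin> set c" using 2 by simp
  show ?case
  proof (cases "\<forall>v\<in>set c. v < x")
    case True then show ?thesis using 2 by (auto simp: tab_entries_def)
  next
    case False
    define z where "z = Min {v \<in> set c. x < v}"
    have zc: "z \<in> set c" "x < z" using Min_gt[OF False xc] unfolding z_def by auto
    have "z \<notin> ent cs" using 2(2) zc by (auto simp: tab_entries_def)
    hence IH: "distinct (concat (col_ins z cs))" using 2 False z_def by (auto simp: tab_entries_def)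
    have e: "set (concat (col_ins z cs)) = insert z (ent cs)" using ent_col_ins[OF _ \<open>z \<notin> ent cs\<close>] 2(2) ent_concat by (metis distinct_append concat.simps(2))
    have d1: "distinct (repl z x c)" using distinct_repl[of c x z] 2(2) xc by simp
    have s1: "set (repl z x c) = insert x (set c - {z})" using set_repl zc by simp
    have "x \<notin> ent cs" using 2(3) by simp
    then have "set (repl z x c) \<inter> set (concat (col_ins z cs)) = {}"
      using s1 e 2(2) zc(2) by (auto simp: tab_entries_def)
    then show ?thesis using col_ins_Cons_bump[OF False] z_def IH d1 by simp
  qed
qed

lemma col_ins_hd: "x \<notin> ent L \<Longrightarrow> \<exists>c' cs'. col_ins x L = c' # cs' \<and> x \<in> set c'"
proof (cases L)
  case Nil then show ?thesis by simp
next
  case (Cons c cs)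
  assume xL: "x \<notin> ent L"
  show ?thesis
  proof (cases "\<forall>v\<in>set c. v < x")
    case True then show ?thesis using Cons by simp
  next
    case False
    have xc: "x \<notin> set c" using xL Cons by simp
    define z where "z = Min {v \<in> set c. x < v}"
    have zc: "z \<in> set c" "x < z" using Min_gt[OF False xc] unfolding z_def by auto
    have "x \<in> set (repl z x c)" using set_repl[OF zc(1)] by simp
    then show ?thesis using Cons col_ins_Cons_bump[OF False] z_def by simp
  qed
qed

lemma colx_col_ins_self: "x \<notin> ent L \<Longrightarrow> colx x (col_ins x L) = 0"
  using col_ins_hd[of x L] by auto

lemma G3_ins:
  assumes "distinct (concat L)" "Suc k \<in> ent L" "k \<notin> ent L"
  shows "0 < colx (Suc k) (col_ins k L)"
proof (cases L)
  case Nil then show ?thesis using assms by simp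
next
  case (Cons c cs)
  have kc: "k \<notin> set c" using assms Cons by simp
  show ?thesis
  proof (cases "\<forall>v\<in>set c. v < k")
    case True
    hence "Suc k \<notin> set c" by auto
    then show ?thesis using Cons True by simp
  next
    case False
    define z where "z = Min {v \<in> set c. k < v}"
    have zc: "z \<in> set c" "k < z" "\<forall>v\<in>set c. k < v \<longrightarrow> z \<le> v" using Min_gt[OF False kc] unfolding z_def by auto
    have "Suc k \<notin> set (repl z k c)"
    proof (cases "Suc k \<in> set c")
      case True
      hence "z = Suc k" using zc by (meson Suc_leI le_antisym lessI)
      then show ?thesis using set_repl[OF zc(1)] by simp
    next
      case False
      then show ?thesis using set_repl[OF zc(1)] by auto
    qed
    then show ?thesis using Cons col_ins_Cons_bump[OF False] z_def by simp
  qed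
qed

lemma G1_ins:
  assumes "distinct (concat L)" "x \<notin> ent L" "k \<in> ent L" "Suc k \<in> ent L" "x \<noteq> k" "x \<noteq> Suc k"
  shows "(colx (Suc k) (col_ins x L) \<le> colx k (col_ins x L)) = (colx (Suc k) L \<le> colx k L)"
  using assms
proof (induction x L rule: col_ins.induct)
  case (1 x) then show ?case by simp
next
  case (2 x c cs)
  have xc: "x \<notin> set c" using 2 by simp
  have dc: "distinct c" and dcs: "distinct (concat cs)" and disj: "set c \<inter> ent cs = {}"
    using 2(2) by (auto simp: tab_entries_def)
  show ?case
  proof (cases "\<forall>v\<in>set c. v < x")
    case True then show ?thesis using 2 by simp
  next
    case False
    define z where "z = Min {v \<in> set c. x < v}"
    have zc: "z \<in> set c" "x < z" "\<forall>v\<in>set c. x < v \<longrightarrow> z \<le> v" using Min_gt[OF False xc] unfolding z_def by auto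
    have eq: "col_ins x (c # cs) = repl z x c # col_ins z cs" using col_ins_Cons_bump[OF False] z_def by simp
    have sr: "\<And>v. v \<in> set (repl z x c) \<longleftrightarrow> (v = x \<or> (v \<in> set c \<and> v \<noteq> z))" using set_repl[OF zc(1)] by auto
    have zcs: "z \<notin> ent cs" using disj zc by auto
    have ec: "\<And>v. v \<in> ent (col_ins z cs) \<longleftrightarrow> v = z \<or> v \<in> ent cs" using ent_col_ins[OF dcs zcs] by auto
    show ?thesis
    proof (cases "z = k")
      case True
      hence kc: "k \<in> set c" using zc by simp
      show ?thesis
      proof (cases "Suc k \<in> set c")
        case True
        then show ?thesis using kc sr \<open>z = k\<close> eq 2(6,7) by auto
      next
        case False
        hence sk: "Suc k \<in> ent cs" using 2(5) by simp
        have "0 < colx (Suc k) (col_ins k cs)" using G3_ins[OF dcs sk] zcs True by simp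
        moreover have "colx k (col_ins k cs) = 0" using colx_col_ins_self zcs True by simp
        ultimately show ?thesis using eq True False sr kc 2(7) by auto
      qed
    next
      case zk: False
      show ?thesis
      proof (cases "z = Suc k")
        case True
        have kc: "k \<notin> set c"
        proof
          assume "k \<in> set c"
          moreover have "x < k" using zc(2) True 2(6) by simp
          ultimately have "z \<le> k" using zc(3) by simp
          then show False using True by simp
        qed
        hence kcs: "k \<in> ent cs" using 2(4) by simp
        have "colx (Suc k) (col_ins (Suc k) cs) = 0" using colx_col_ins_self zcs True by simp
        then show ?thesis using eq True kc sr zc 2(6) 2(7) by auto
      next
        case zsk: False
        show ?thesis
        proof (cases "k \<in> set c \<or> Suc k \<in> set c")
          case True
          then show ?thesis using eq sr zk zsk 2(6,7) by auto
        next
          case False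
          hence "k \<in> ent cs" "Suc k \<in> ent cs" using 2(4,5) by auto
          hence IH: "(colx (Suc k) (col_ins z cs) \<le> colx k (col_ins z cs)) = (colx (Suc k) cs \<le> colx k cs)"
            using "2.IH"[OF \<open>\<not> (\<forall>v\<in>set c. v < x)\<close> z_def dcs zcs] zk zsk \<open>k \<in> ent cs\<close> \<open>Suc k \<in> ent cs\<close> by blast
          then show ?thesis using eq sr False 2(6,7) by auto
        qed
      qed
    qed
  qed
qed




definition cnt :: "nat set \<Rightarrow> nat \<Rightarrow> nat" where "cnt S t = card {v\<in>S. v < t}"
definition cle :: "nat set \<Rightarrow> nat \<Rightarrow> nat" where "cle S t = card {v\<in>S. v \<le> t}"

lemma cnt_ins: "finite S \<Longrightarrow> x \<notin> S \<Longrightarrow> cnt (insert x S) t = cnt S t + (if x < t then 1 else 0)"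
proof -
  assume f: "finite S" and x: "x \<notin> S"
  show ?thesis
  proof (cases "x < t")
    case True
    hence "{v\<in>insert x S. v < t} = insert x {v\<in>S. v < t}" by auto
    then show ?thesis using f x True by (simp add: cnt_def)
  next
    case False
    hence "{v\<in>insert x S. v < t} = {v\<in>S. v < t}" by auto
    then show ?thesis using False by (simp add: cnt_def)
  qed
qed

lemma cle_ins: "finite S \<Longrightarrow> x \<notin> S \<Longrightarrow> cle (insert x S) t = cle S t + (if x \<le> t then 1 else 0)"
proof -
  assume f: "finite S" and x: "x \<notin> S"
  show ?thesis
  proof (cases "x \<le> t")
    case True
    hence "{v\<in>insert x S. v \<le> t} = insert x {v\<in>S. v \<le> t}" by auto
    then show ?thesis using f x True by (simp add: cle_def)
  next
    case False
    hence "{v\<in>insert x S. v \<le> t} = {v\<in>S. v \<le> t}" by auto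
    then show ?thesis using False by (simp add: cle_def)
  qed
qed

lemma cnt_del: "finite S \<Longrightarrow> z \<in> S \<Longrightarrow> cnt (S - {z}) t + (if z < t then 1 else 0) = cnt S t"
  using cnt_ins[of "S - {z}" z t] by (simp add: insert_absorb)

lemma cle_del: "finite S \<Longrightarrow> z \<in> S \<Longrightarrow> cle (S - {z}) t + (if z \<le> t then 1 else 0) = cle S t"
  using cle_ins[of "S - {z}" z t] by (simp add: insert_absorb)

lemma cle_cnt: "finite S \<Longrightarrow> cle S t = cnt S t + (if t \<in> S then 1 else 0)"
proof -
  assume f: "finite S"
  show ?thesis
  proof (cases "t \<in> S")
    case True
    hence "{v\<in>S. v \<le> t} = insert t {v\<in>S. v < t}" by auto
    then show ?thesis using f True by (simp add: cle_def cnt_def)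
  next
    case False
    have "\<And>v. v \<in> S \<Longrightarrow> (v \<le> t) = (v < t)" using False by (metis le_less)
    hence "{v\<in>S. v \<le> t} = {v\<in>S. v < t}" by blast
    then show ?thesis using False by (simp add: cle_def cnt_def)
  qed
qed

lemma cnt_mono: "finite S \<Longrightarrow> t \<le> t' \<Longrightarrow> cnt S t \<le> cnt S t'"
  unfolding cnt_def by (rule card_mono) auto

lemma cle_mono: "finite S \<Longrightarrow> t \<le> t' \<Longrightarrow> cle S t \<le> cle S t'"
  unfolding cle_def by (rule card_mono) auto

lemma cle_cnt_lt: "finite S \<Longrightarrow> t < t' \<Longrightarrow> cle S t \<le> cnt S t'"
  unfolding cle_def cnt_def by (rule card_mono) auto

lemma cnt_le_cle: "finite S \<Longrightarrow> cnt S t \<le> cle S t"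
  unfolding cle_def cnt_def by (rule card_mono) auto

lemma cnt_gap: "(\<And>v. v \<in> S \<Longrightarrow> t \<le> v \<Longrightarrow> t' \<le> v) \<Longrightarrow> t \<le> t' \<Longrightarrow> cnt S t' = cnt S t"
proof -
  assume h: "\<And>v. v \<in> S \<Longrightarrow> t \<le> v \<Longrightarrow> t' \<le> v" and tt: "t \<le> t'"
  have "\<And>v. v \<in> S \<Longrightarrow> (v < t') = (v < t)"
  proof -
    fix v assume "v \<in> S"
    show "(v < t') = (v < t)" using h[OF \<open>v \<in> S\<close>] tt by linarith
  qed
  hence "{v\<in>S. v < t'} = {v\<in>S. v < t}" by blast
  then show ?thesis by (simp add: cnt_def)
qed

lemma cle_gap: "(\<And>v. v \<in> S \<Longrightarrow> t < v \<Longrightarrow> t' < v) \<Longrightarrow> t \<le> t' \<Longrightarrow> cle S t' = cle S t"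
proof -
  assume h: "\<And>v. v \<in> S \<Longrightarrow> t < v \<Longrightarrow> t' < v" and tt: "t \<le> t'"
  have "\<And>v. v \<in> S \<Longrightarrow> (v \<le> t') = (v \<le> t)"
  proof -
    fix v assume "v \<in> S"
    show "(v \<le> t') = (v \<le> t)" using h[OF \<open>v \<in> S\<close>] tt by linarith
  qed
  hence "{v\<in>S. v \<le> t'} = {v\<in>S. v \<le> t}" by blast
  then show ?thesis by (simp add: cle_def)
qed

lemma cnt_elem: "finite S \<Longrightarrow> z \<in> S \<Longrightarrow> z < t \<Longrightarrow> cnt S z + 1 \<le> cnt S t"
proof -
  assume f: "finite S" "z \<in> S" "z < t"
  have "insert z {v\<in>S. v < z} \<subseteq> {v\<in>S. v < t}" using f by auto
  hence "card (insert z {v\<in>S. v < z}) \<le> card {v\<in>S. v < t}" using f by (intro card_mono) auto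
  then show ?thesis using f by (simp add: cnt_def)
qed

lemma cnt_card: "finite S \<Longrightarrow> cnt S t \<le> card S" unfolding cnt_def by (rule card_mono) auto
lemma cle_card: "finite S \<Longrightarrow> cle S t \<le> card S" unfolding cle_def by (rule card_mono) auto
lemma cnt_all: "finite S \<Longrightarrow> \<forall>v\<in>S. v < t \<Longrightarrow> cnt S t = card S"
  unfolding cnt_def proof - assume "\<forall>v\<in>S. v < t" hence "{v\<in>S. v < t} = S" by blast thus "card {v\<in>S. v < t} = card S" by simp qed
lemma cle_all: "finite S \<Longrightarrow> \<forall>v\<in>S. v \<le> t \<Longrightarrow> cle S t = card S"
  unfolding cle_def proof - assume "\<forall>v\<in>S. v \<le> t" hence "{v\<in>S. v \<le> t} = S" by blast thus "card {v\<in>S. v \<le> t} = card S" by simp qed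




section \<open>Well-formed tableaux\<close>

definition domc :: "nat list \<Rightarrow> nat list \<Rightarrow> bool" where
  "domc a b \<longleftrightarrow> (\<forall>t. cle (set b) t \<le> cnt (set a) t)"

definition wft :: "nat list list \<Rightarrow> bool" where
  "wft T \<longleftrightarrow> (\<forall>c\<in>set T. sorted_wrt (<) c) \<and> distinct (concat T) \<and>
     (\<forall>m. Suc m < length T \<longrightarrow> domc (T!m) (T!Suc m))"

lemma wf_Nil[simp]: "wft []" by (simp add: wft_def)

lemma wf_Cons: "wft (c # cs) \<longleftrightarrow> sorted_wrt (<) c \<and> wft cs \<and> set c \<inter> ent cs = {} \<and> (cs \<noteq> [] \<longrightarrow> domc c (hd cs))"
proof -
  have ch: "(\<forall>m. Suc m < length (c#cs) \<longrightarrow> domc ((c#cs)!m) ((c#cs)!Suc m)) \<longleftrightarrow>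
     (cs \<noteq> [] \<longrightarrow> domc c (hd cs)) \<and> (\<forall>m. Suc m < length cs \<longrightarrow> domc (cs!m) (cs!Suc m))"
  proof
    assume h: "\<forall>m. Suc m < length (c#cs) \<longrightarrow> domc ((c#cs)!m) ((c#cs)!Suc m)"
    have "cs \<noteq> [] \<longrightarrow> domc c (hd cs)" using h[rule_format, of 0] by (cases cs) auto
    moreover have "\<forall>m. Suc m < length cs \<longrightarrow> domc (cs!m) (cs!Suc m)"
      using h by (metis Suc_less_eq length_Cons nth_Cons_Suc)
    ultimately show "(cs \<noteq> [] \<longrightarrow> domc c (hd cs)) \<and> (\<forall>m. Suc m < length cs \<longrightarrow> domc (cs!m) (cs!Suc m))" by blast
  next
    assume h: "(cs \<noteq> [] \<longrightarrow> domc c (hd cs)) \<and> (\<forall>m. Suc m < length cs \<longrightarrow> domc (cs!m) (cs!Suc m))"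
    show "\<forall>m. Suc m < length (c#cs) \<longrightarrow> domc ((c#cs)!m) ((c#cs)!Suc m)"
    proof (intro allI impI)
      fix m assume m: "Suc m < length (c#cs)"
      show "domc ((c#cs)!m) ((c#cs)!Suc m)"
      proof (cases m)
        case 0 then show ?thesis using h m by (cases cs) auto
      next
        case (Suc m') then show ?thesis using h m by simp
      qed
    qed
  qed
  show ?thesis unfolding wft_def ch
    by (auto simp: tab_entries_def strict_sorted_iff)
qed

lemma domc_trans: "domc a b \<Longrightarrow> domc b c \<Longrightarrow> domc a c"
  unfolding domc_def by (meson cnt_le_cle finite_set le_trans)

lemma wf_domc_lt: "wft T \<Longrightarrow> m < n \<Longrightarrow> n < length T \<Longrightarrow> domc (T!m) (T!n)"
proof (induction n)
  case 0 then show ?case by simp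
next
  case (Suc n)
  have d1: "domc (T!n) (T!Suc n)" using Suc.prems unfolding wft_def by blast
  show ?case
  proof (cases "m = n")
    case True then show ?thesis using d1 by simp
  next
    case False then show ?thesis using Suc d1 domc_trans by (meson Suc_lessD less_Suc_eq)
  qed
qed

lemma domc_card: "domc a b \<Longrightarrow> card (set b) \<le> card (set a)"
proof -
  assume d: "domc a b"
  have "cle (set b) (sum_list b) = card (set b)" by (rule cle_all) (auto simp: member_le_sum_list)
  moreover have "cnt (set a) (sum_list b) \<le> card (set a)" by (rule cnt_card) simp
  ultimately show ?thesis using d unfolding domc_def by (metis le_trans)
qed

definition rowx :: "nat list list \<Rightarrow> nat \<Rightarrow> nat" where
  "rowx T v = cnt (set (T ! colx v T)) v"

lemma wf_distinct: "wft T \<Longrightarrow> distinct (concat T)" by (simp add: wft_def)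
lemma wf_sorted: "wft T \<Longrightarrow> c \<in> set T \<Longrightarrow> sorted_wrt (<) c" by (simp add: wft_def)

lemma cnt_Suc: "finite S \<Longrightarrow> cnt S (Suc k) = cnt S k + (if k \<in> S then 1 else 0)"
proof -
  assume f: "finite S"
  have "cnt S (Suc k) = cle S k" unfolding cnt_def cle_def by (simp add: less_Suc_eq_le)
  then show ?thesis using cle_cnt[OF f] by simp
qed

lemma dichotomy:
  assumes w: "wft T" and k: "k \<in> ent T" and sk: "Suc k \<in> ent T"
  shows "(colx (Suc k) T \<le> colx k T) \<longleftrightarrow> rowx T k < rowx T (Suc k)"
proof -
  define c1 where "c1 = colx k T"
  define c2 where "c2 = colx (Suc k) T"
  have b1: "c1 < length T" "k \<in> set (T!c1)" using colx_bound[OF k] c1_def by auto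
  have b2: "c2 < length T" "Suc k \<in> set (T!c2)" using colx_bound[OF sk] c2_def by auto
  have d: "distinct (concat T)" using w wf_distinct by blast
  have r1: "rowx T k = cnt (set (T!c1)) k" by (simp add: rowx_def c1_def)
  have r2: "rowx T (Suc k) = cnt (set (T!c2)) (Suc k)" by (simp add: rowx_def c2_def)
  have e1: "cle (set (T!c1)) k = cnt (set (T!c1)) k + 1" using cle_cnt[of "set (T!c1)" k] b1 by simp
  have e2: "cle (set (T!c2)) (Suc k) = cnt (set (T!c2)) (Suc k) + 1" using cle_cnt[of "set (T!c2)" "Suc k"] b2 by simp
  consider "c2 < c1" | "c2 = c1" | "c1 < c2" by linarith
  then show ?thesis
  proof cases
    case 1
    have "k \<notin> set (T!c2)" using colx_nth[OF d b2(1)] 1 c1_def by fastforce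
    hence "cnt (set (T!c2)) (Suc k) = cnt (set (T!c2)) k" using cnt_Suc by simp
    moreover have "cle (set (T!c1)) k \<le> cnt (set (T!c2)) k" using wf_domc_lt[OF w 1 b1(1)] unfolding domc_def by blast
    ultimately show ?thesis using 1 r1 r2 e1 c1_def c2_def by simp
  next
    case 2
    then show ?thesis using r1 r2 cnt_Suc[of "set (T!c1)" k] b1 c1_def c2_def by simp
  next
    case 3
    have "cle (set (T!c2)) (Suc k) \<le> cnt (set (T!c1)) (Suc k)" using wf_domc_lt[OF w 3 b2(1)] unfolding domc_def by blast
    moreover have "cnt (set (T!c1)) (Suc k) = cnt (set (T!c1)) k + 1" using cnt_Suc[of "set (T!c1)" k] b1 by simp
    ultimately show ?thesis using 3 r1 r2 e2 c1_def c2_def by simp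
  qed
qed

lemma cnt_nth:
  assumes "sorted_wrt (<) c" "i < length c"
  shows "cnt (set c) (c!i) = i"
proof -
  have dist: "distinct c" using assms(1) strict_sorted_iff by blast
  have "{u \<in> set c. u < c!i} = (\<lambda>p. c!p) ` {..<i}"
  proof
    show "{u \<in> set c. u < c!i} \<subseteq> (\<lambda>p. c!p) ` {..<i}"
    proof
      fix u assume u: "u \<in> {u \<in> set c. u < c!i}"
      then obtain p where p: "p < length c" "c!p = u" by (auto simp: in_set_conv_nth)
      have "p < i"
      proof (rule ccontr)
        assume "\<not> p < i"
        hence "i \<le> p" by simp
        hence "c!i \<le> c!p"
        proof (cases "i = p")
          case False
          hence "i < p" using \<open>i \<le> p\<close> by simp
          then show ?thesis using assms(1) p(1) by (simp add: sorted_wrt_iff_nth_less less_imp_le)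
        qed simp
        then show False using u p by simp
      qed
      then show "u \<in> (\<lambda>p. c!p) ` {..<i}" using p by auto
    qed
  next
    show "(\<lambda>p. c!p) ` {..<i} \<subseteq> {u \<in> set c. u < c!i}"
      using assms by (auto simp: sorted_wrt_iff_nth_less)
  qed
  moreover have "inj_on (\<lambda>p. c!p) {..<i}"
    using dist assms(2) by (auto simp: inj_on_def nth_eq_iff_index_eq)
  ultimately show ?thesis unfolding cnt_def by (simp add: card_image)
qed

lemma tab_row_eq:
  assumes w: "wft T" and v: "v \<in> ent T"
  shows "tab_row T v = rowx T v"
proof -
  define j where "j = colx v T"
  have b: "j < length T" "v \<in> set (T!j)" using colx_bound[OF v] j_def by auto
  have s: "sorted_wrt (<) (T!j)" using w b(1) wf_sorted by auto
  obtain i where i: "i < length (T!j)" "T!j!i = v" using b(2) by (auto simp: in_set_conv_nth)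
  have ri: "rowx T v = i" using cnt_nth[OF s i(1)] i(2) j_def by (simp add: rowx_def)
  have "\<exists>j<length T. i < length (T ! j) \<and> T ! j ! i = v" using b i by blast
  moreover have "\<And>i'. (\<exists>j<length T. i' < length (T ! j) \<and> T ! j ! i' = v) \<Longrightarrow> i' = i"
  proof -
    fix i' assume "\<exists>j<length T. i' < length (T ! j) \<and> T ! j ! i' = v"
    then obtain j' where j': "j' < length T" "i' < length (T!j')" "T!j'!i' = v" by blast
    have "j' = j" using colx_nth[OF wf_distinct[OF w] j'(1)] j' j_def by (metis nth_mem)
    then show "i' = i" using cnt_nth[OF s] j' i by (metis)
  qed
  ultimately have "tab_row T v = i" unfolding tab_row_def by (rule the_equality)
  then show ?thesis using ri by simp
qed




lemma pair_ins:
  fixes A B B' :: "nat set"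
  assumes fA: "finite A" and fB: "finite B"
    and dm: "\<forall>t. cle B t \<le> cnt A t"
    and xA: "x \<notin> A" and zA: "z \<in> A" and xz: "x < z" and zmin: "\<forall>v\<in>A. x < v \<longrightarrow> z \<le> v"
    and zB: "z \<notin> B"
    and Bc: "(B' = insert z B \<and> (\<forall>v\<in>B. v < z)) \<or>
             (\<exists>z'. z' \<in> B \<and> z < z' \<and> (\<forall>v\<in>B. z < v \<longrightarrow> z' \<le> v) \<and> B' = insert z (B - {z'}))"
  shows "\<forall>t. cle B' t \<le> cnt (insert x (A - {z})) t"
proof
  fix t
  have fA': "finite (A - {z})" using fA by simp
  have cA': "cnt (insert x (A - {z})) t = cnt (A - {z}) t + (if x < t then 1 else 0)"
    using cnt_ins[OF fA', of x t] xA by simp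
  have cA2: "cnt (A - {z}) t + (if z < t then 1 else 0) = cnt A t" using cnt_del[OF fA zA] by simp
  have dz: "cle B z \<le> cnt A z" using dm by blast
  have dt: "cle B t \<le> cnt A t" using dm by blast
  show "cle B' t \<le> cnt (insert x (A - {z})) t"
  proof (cases "t < z")
    case True
    have "cle B' t \<le> cle B t"
      using Bc
    proof
      assume h: "B' = insert z B \<and> (\<forall>v\<in>B. v < z)"
      then show ?thesis using cle_ins[OF fB zB, of t] True by simp
    next
      assume "\<exists>z'. z' \<in> B \<and> z < z' \<and> (\<forall>v\<in>B. z < v \<longrightarrow> z' \<le> v) \<and> B' = insert z (B - {z'})"
      then obtain z' where h: "z' \<in> B" "z < z'" "B' = insert z (B - {z'})" by blast
      have "cle B' t = cle (B - {z'}) t" using cle_ins[of "B - {z'}" z t] fB zB h True by simp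
      also have "\<dots> \<le> cle B t" using cle_del[OF fB h(1), of t] by simp
      finally show ?thesis .
    qed
    then show ?thesis using cA' cA2 dt True by simp
  next
    case False
    hence zt: "z \<le> t" by simp
    have A_t: "cnt (insert x (A - {z})) t = cnt A t + (if t = z then 1 else 0)"
      using cA' cA2 xz zt by (cases "t = z") auto
    have key: "cle B t + 1 \<le> cnt (insert x (A - {z})) t" if gap: "\<forall>v\<in>B. z < v \<longrightarrow> t < v"
    proof -
      have "cle B t = cle B z" using cle_gap[of B z t] gap zt by blast
      show ?thesis
      proof (cases "t = z")
        case True then show ?thesis using A_t dz by simp
      next
        case False
        hence "z < t" using zt by simp
        hence "cnt A z + 1 \<le> cnt A t" using cnt_elem[OF fA zA] by simp
        then show ?thesis using A_t dz \<open>cle B t = cle B z\<close> False by simp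
      qed
    qed
    show ?thesis
      using Bc
    proof
      assume h: "B' = insert z B \<and> (\<forall>v\<in>B. v < z)"
      have "cle B' t = cle B t + 1" using cle_ins[OF fB zB, of t] h zt by simp
      moreover have "\<forall>v\<in>B. z < v \<longrightarrow> t < v" using h by auto
      ultimately show ?thesis using key by simp
    next
      assume "\<exists>z'. z' \<in> B \<and> z < z' \<and> (\<forall>v\<in>B. z < v \<longrightarrow> z' \<le> v) \<and> B' = insert z (B - {z'})"
      then obtain z' where h: "z' \<in> B" "z < z'" "\<forall>v\<in>B. z < v \<longrightarrow> z' \<le> v" "B' = insert z (B - {z'})" by blast
      have c1: "cle B' t = cle (B - {z'}) t + 1" using cle_ins[of "B - {z'}" z t] fB zB h zt by simp
      have c2: "cle (B - {z'}) t + (if z' \<le> t then 1 else 0) = cle B t" using cle_del[OF fB h(1)] by simp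
      show ?thesis
      proof (cases "z' \<le> t")
        case True
        hence "z \<noteq> t" using h(2) by simp
        then show ?thesis using c1 c2 True A_t dt by simp
      next
        case False
        hence "\<forall>v\<in>B. z < v \<longrightarrow> t < v" using h(3) by (meson le_trans not_le)
        then show ?thesis using key c1 c2 False by simp
      qed
    qed
  qed
qed

lemma col_ins_hd_struct:
  assumes "z \<notin> set d"
  shows "(set (hd (col_ins z (d # ds))) = insert z (set d) \<and> (\<forall>v\<in>set d. v < z)) \<or>
     (\<exists>z'. z' \<in> set d \<and> z < z' \<and> (\<forall>v\<in>set d. z < v \<longrightarrow> z' \<le> v) \<and> set (hd (col_ins z (d # ds))) = insert z (set d - {z'}))"
proof (cases "\<forall>v\<in>set d. v < z")
  case True then show ?thesis by simp
next
  case False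
  define z' where "z' = Min {v \<in> set d. z < v}"
  have zc: "z' \<in> set d" "z < z'" "\<forall>v\<in>set d. z < v \<longrightarrow> z' \<le> v" using Min_gt[OF False assms] unfolding z'_def by auto
  have "set (hd (col_ins z (d # ds))) = insert z (set d - {z'})"
    using col_ins_Cons_bump[OF False] set_repl[OF zc(1)] z'_def by simp
  then show ?thesis using zc by blast
qed

lemma wf_col_ins: "wft L \<Longrightarrow> x \<notin> ent L \<Longrightarrow> wft (col_ins x L)"
proof (induction x L rule: col_ins.induct)
  case (1 x) then show ?case by (simp add: wf_Cons)
next
  case (2 x c cs)
  have sc: "sorted_wrt (<) c" and wcs: "wft cs" and disj: "set c \<inter> ent cs = {}"
    and hdd: "cs \<noteq> [] \<longrightarrow> domc c (hd cs)" using 2(2) wf_Cons by auto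
  have xc: "x \<notin> set c" and xcs: "x \<notin> ent cs" using 2(3) by auto
  show ?case
  proof (cases "\<forall>v\<in>set c. v < x")
    case True
    have s1: "sorted_wrt (<) (c @ [x])" using sc True by (simp add: sorted_wrt_append)
    have "cs \<noteq> [] \<longrightarrow> domc (c @ [x]) (hd cs)"
    proof
      assume "cs \<noteq> []"
      hence d: "domc c (hd cs)" using hdd by simp
      show "domc (c @ [x]) (hd cs)" unfolding domc_def
      proof
        fix t
        have "cnt (set c) t \<le> cnt (set (c @ [x])) t" using cnt_ins[of "set c" x t] xc by simp
        then show "cle (set (hd cs)) t \<le> cnt (set (c @ [x])) t" using d unfolding domc_def by (meson le_trans)
      qed
    qed
    then show ?thesis using True s1 wcs disj xcs by (simp add: wf_Cons)
  next
    case False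
    define z where "z = Min {v \<in> set c. x < v}"
    have zc: "z \<in> set c" "x < z" "\<forall>v\<in>set c. x < v \<longrightarrow> z \<le> v" using Min_gt[OF False xc] unfolding z_def by auto
    have eq: "col_ins x (c # cs) = repl z x c # col_ins z cs" using col_ins_Cons_bump[OF False] z_def by simp
    have zcs: "z \<notin> ent cs" using disj zc by auto
    have IH: "wft (col_ins z cs)" using 2(1)[OF False z_def wcs zcs] .
    have sr: "sorted_wrt (<) (repl z x c)"
    proof (rule sorted_repl[OF sc xc _ zc(1)])
      fix v assume v: "v \<in> set c" "v \<noteq> z"
      show "(v < z) = (v < x)"
      proof
        assume "v < z"
        show "v < x"
        proof (rule ccontr)
          assume "\<not> v < x"
          hence "x < v" using v xc by (metis le_neq_implies_less not_le)
          then show False using zc(3) v \<open>v < z\<close> by fastforce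
        qed
      next
        assume "v < x" then show "v < z" using zc(2) by simp
      qed
    qed
    have setr: "set (repl z x c) = insert x (set c - {z})" using set_repl[OF zc(1)] .
    have dcs: "distinct (concat cs)" using wcs wf_distinct by blast
    have ent2: "ent (col_ins z cs) = insert z (ent cs)" using ent_col_ins[OF dcs zcs] .
    have disj2: "set (repl z x c) \<inter> ent (col_ins z cs) = {}" using setr ent2 disj xcs zc(2) by auto
    have dm: "domc (repl z x c) (hd (col_ins z cs))"
    proof (cases cs)
      case Nil
      show ?thesis unfolding domc_def
      proof
        fix t
        have "cle {z} t \<le> cnt (insert x (set c - {z})) t"
        proof (cases "z \<le> t")
          case True
          have "{v \<in> {z}. v \<le> t} = {z}" using True by auto
          hence "cle {z} t = 1" by (simp add: cle_def)
          moreover have "1 \<le> cnt (insert x (set c - {z})) t"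
          proof -
            have "{x} \<subseteq> {v \<in> insert x (set c - {z}). v < t}" using zc(2) True by simp
            hence "card {x} \<le> card {v \<in> insert x (set c - {z}). v < t}" by (intro card_mono) auto
            then show ?thesis unfolding cnt_def by simp
          qed
          ultimately show ?thesis by simp
        next
          case False
          hence "cle {z} t = 0" by (simp add: cle_def)
          then show ?thesis by simp
        qed
        then show "cle (set (hd (col_ins z cs))) t \<le> cnt (set (repl z x c)) t" using Nil setr by simp
      qed
    next
      case (Cons d ds)
      have zd: "z \<notin> set d" using zcs Cons by simp
      have dd: "domc c d" using hdd Cons by simp
      have "\<forall>t. cle (set (hd (col_ins z (d # ds)))) t \<le> cnt (insert x (set c - {z})) t"
        by (rule pair_ins[OF _ _ _ xc zc(1) zc(2) zc(3) zd col_ins_hd_struct[OF zd]])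
           (use dd in \<open>auto simp: domc_def\<close>)
      then show ?thesis using Cons setr unfolding domc_def by simp
    qed
    show ?thesis using eq sr IH disj2 dm by (simp add: wf_Cons)
  qed
qed




definition before :: "nat list \<Rightarrow> nat \<Rightarrow> nat \<Rightarrow> bool" where
  "before u a b \<longleftrightarrow> (\<exists>u1 u2. u = u1 @ u2 \<and> a \<in> set u1 \<and> b \<in> set u2)"

lemma before_Nil[simp]: "\<not> before [] a b" by (simp add: before_def)

lemma before_snoc: "before (u @ [y]) a b \<longleftrightarrow> before u a b \<or> (a \<in> set u \<and> b = y)"
proof
  assume "before (u @ [y]) a b"
  then obtain u1 u2 where h: "u @ [y] = u1 @ u2" "a \<in> set u1" "b \<in> set u2" by (auto simp: before_def)
  show "before u a b \<or> (a \<in> set u \<and> b = y)"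
  proof (cases u2 rule: rev_cases)
    case Nil then show ?thesis using h by simp
  next
    case (snoc u2' y')
    hence "u = u1 @ u2'" "y' = y" using h(1) by auto
    then show ?thesis using h snoc unfolding before_def by auto
  qed
next
  assume "before u a b \<or> (a \<in> set u \<and> b = y)"
  then show "before (u @ [y]) a b"
  proof
    assume "before u a b"
    then obtain u1 u2 where h: "u = u1 @ u2" "a \<in> set u1" "b \<in> set u2" by (auto simp: before_def)
    then show ?thesis unfolding before_def by (rule_tac x=u1 in exI, rule_tac x="u2 @ [y]" in exI) auto
  next
    assume "a \<in> set u \<and> b = y"
    then show ?thesis unfolding before_def by (rule_tac x=u in exI, rule_tac x="[y]" in exI) auto
  qed
qed

lemma before_set: "before u a b \<Longrightarrow> a \<in> set u \<and> b \<in> set u"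
  by (auto simp: before_def)

lemma before_append: "before (X @ Y) a b \<longleftrightarrow> before X a b \<or> before Y a b \<or> (a \<in> set X \<and> b \<in> set Y)"
proof (induction Y rule: rev_induct)
  case Nil then show ?case by (auto dest: before_set)
next
  case (snoc y Y)
  have "before (X @ Y @ [y]) a b = (before (X @ Y) a b \<or> (a \<in> set (X @ Y) \<and> b = y))"
    using before_snoc[of "X @ Y" y a b] by simp
  also have "\<dots> = (before X a b \<or> before (Y @ [y]) a b \<or> (a \<in> set X \<and> b \<in> set (Y @ [y])))"
    using snoc before_snoc[of Y y a b] by auto
  finally show ?case by simp
qed

lemma before_sorted: "before u a b \<Longrightarrow> sorted_wrt (<) u \<Longrightarrow> a < b"
  by (auto simp: before_def sorted_wrt_append)

lemma before_rev: "before (rev u) a b \<Longrightarrow> before u b a"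
proof -
  assume "before (rev u) a b"
  then obtain u1 u2 where h: "rev u = u1 @ u2" "a \<in> set u1" "b \<in> set u2" by (auto simp: before_def)
  hence "u = rev u2 @ rev u1" by (metis rev_append rev_rev_ident)
  then show ?thesis using h unfolding before_def by (rule_tac x="rev u2" in exI, rule_tac x="rev u1" in exI) auto
qed

abbreviation cfold :: "nat list list \<Rightarrow> nat list \<Rightarrow> nat list list" where
  "cfold S u \<equiv> foldl (\<lambda>S x. col_ins x S) S u"

lemma cfold_basic:
  assumes "distinct (concat S)" "distinct u" "set u \<inter> ent S = {}"
  shows "ent (cfold S u) = ent S \<union> set u \<and> distinct (concat (cfold S u))"
  using assms
proof (induction u rule: rev_induct)
  case Nil then show ?case by simp
next
  case (snoc y u)
  have IH: "ent (cfold S u) = ent S \<union> set u" "distinct (concat (cfold S u))" using snoc by auto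
  have "y \<notin> ent (cfold S u)" using IH snoc.prems by auto
  then show ?case using IH ent_col_ins distinct_col_ins by auto
qed

lemma cfold_wf:
  assumes "wft S" "distinct u" "set u \<inter> ent S = {}"
  shows "wft (cfold S u)"
  using assms
proof (induction u rule: rev_induct)
  case Nil then show ?case by simp
next
  case (snoc y u)
  have IH: "wft (cfold S u)" using snoc by auto
  have "ent (cfold S u) = ent S \<union> set u" using cfold_basic[of S u] snoc.prems wf_distinct by auto
  hence "y \<notin> ent (cfold S u)" using snoc.prems by auto
  then show ?case using IH wf_col_ins by simp
qed

definition Gp :: "nat list list \<Rightarrow> nat \<Rightarrow> bool" where
  "Gp T k \<longleftrightarrow> colx (Suc k) T \<le> colx k T"

lemma cfold_G:
  assumes "distinct (concat S)" "distinct u" "set u \<inter> ent S = {}"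
    "k \<in> ent S \<union> set u" "Suc k \<in> ent S \<union> set u"
  shows "Gp (cfold S u) k \<longleftrightarrow>
    (if k \<in> ent S \<and> Suc k \<in> ent S then Gp S k
     else if k \<in> ent S then True else if Suc k \<in> ent S then False else before u k (Suc k))"
  using assms
proof (induction u rule: rev_induct)
  case Nil then show ?case by simp
next
  case (snoc y u)
  have bas: "ent (cfold S u) = ent S \<union> set u" "distinct (concat (cfold S u))"
    using cfold_basic[of S u] snoc.prems by auto
  have yF: "y \<notin> ent (cfold S u)" using bas snoc.prems by auto
  have yu: "y \<notin> set u" using snoc.prems by simp
  have eq: "cfold S (u @ [y]) = col_ins y (cfold S u)" by simp
  consider "y \<noteq> k \<and> y \<noteq> Suc k" | "y = Suc k" | "y = k" by blast
  then show ?case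
  proof cases
    case 1
    have ku: "k \<in> ent S \<union> set u" "Suc k \<in> ent S \<union> set u" using snoc.prems 1 by auto
    have IH: "Gp (cfold S u) k \<longleftrightarrow>
      (if k \<in> ent S \<and> Suc k \<in> ent S then Gp S k
       else if k \<in> ent S then True else if Suc k \<in> ent S then False else before u k (Suc k))"
      using snoc.IH snoc.prems ku by auto
    have "Gp (col_ins y (cfold S u)) k = Gp (cfold S u) k"
      unfolding Gp_def using G1_ins[OF bas(2) yF] ku bas 1 by auto
    moreover have "before (u @ [y]) k (Suc k) = before u k (Suc k)" using before_snoc 1 by auto
    ultimately show ?thesis using eq IH by simp
  next
    case 2
    have "Gp (col_ins y (cfold S u)) k" unfolding Gp_def using colx_col_ins_self[OF yF] 2 by simp
    moreover have "Suc k \<notin> ent S" using snoc.prems 2 by auto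
    moreover have "k \<in> ent S \<or> (k \<in> set u)" using snoc.prems 2 by auto
    ultimately show ?thesis using eq before_snoc[of u y k "Suc k"] 2 by auto
  next
    case 3
    have sk: "Suc k \<in> ent (cfold S u)" using snoc.prems 3 bas by auto
    have "0 < colx (Suc k) (col_ins k (cfold S u))" using G3_ins[OF bas(2) sk] yF 3 by simp
    moreover have "colx k (col_ins k (cfold S u)) = 0" using colx_col_ins_self yF 3 by simp
    ultimately have "\<not> Gp (col_ins y (cfold S u)) k" unfolding Gp_def using 3 by simp
    moreover have "k \<notin> ent S" using snoc.prems 3 by auto
    moreover have "\<not> before (u @ [y]) k (Suc k)" using before_snoc[of u y k "Suc k"] 3 yu before_set by auto
    ultimately show ?thesis using eq 3 by auto
  qed
qed

lemma before_concat_rev: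
  assumes "\<forall>c\<in>set L. sorted_wrt (<) c" "distinct (concat L)" "a < b" "a \<in> ent L" "b \<in> ent L"
  shows "before (concat (map rev L)) a b \<longleftrightarrow> colx a L < colx b L"
  using assms
proof (induction L)
  case Nil then show ?case by simp
next
  case (Cons c cs)
  have sc: "sorted_wrt (<) c" using Cons by simp
  have disj: "set c \<inter> ent cs = {}" using Cons.prems(2) by (auto simp: tab_entries_def)
  have e: "set (concat (map rev cs)) = ent cs" by (auto simp: tab_entries_def)
  have ba: "before (concat (map rev (c # cs))) a b \<longleftrightarrow>
     before (rev c) a b \<or> before (concat (map rev cs)) a b \<or> (a \<in> set c \<and> b \<in> ent cs)"
    using before_append[of "rev c" "concat (map rev cs)" a b] e by (simp add: tab_entries_def)
  have nrc: "\<not> before (rev c) a b" using before_rev before_sorted sc Cons.prems(3) by fastforce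
  consider "a \<in> set c \<and> b \<in> set c" | "a \<in> set c \<and> b \<notin> set c" | "a \<notin> set c \<and> b \<in> set c" | "a \<notin> set c \<and> b \<notin> set c" by blast
  then show ?case
  proof cases
    case 1
    have "\<not> before (concat (map rev cs)) a b" using before_set e disj 1 by blast
    then show ?thesis using ba nrc 1 disj by auto
  next
    case 2
    then show ?thesis using ba Cons.prems by auto
  next
    case 3
    have "\<not> before (concat (map rev cs)) a b" using before_set e disj 3 by blast
    then show ?thesis using ba nrc 3 by auto
  next
    case 4
    have IH: "before (concat (map rev cs)) a b \<longleftrightarrow> colx a cs < colx b cs"
      using Cons 4 by auto
    then show ?thesis using ba nrc 4 by auto
  qed
qed

lemma before_map_sorted:
  assumes s: "sorted_wrt (<) s" and invk: "\<And>a. a \<in> set s \<Longrightarrow> f a \<in> set s \<and> f (f a) = a"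
    and k: "k \<in> set s" and sk: "k' \<in> set s" and kk: "k \<noteq> k'"
  shows "before (map f s) k k' \<longleftrightarrow> f k < f k'"
proof
  assume "before (map f s) k k'"
  then obtain u1 u2 where h: "map f s = u1 @ u2" "k \<in> set u1" "k' \<in> set u2" by (auto simp: before_def)
  then obtain s1 s2 where ss: "s = s1 @ s2" "map f s1 = u1" "map f s2 = u2" by (metis map_eq_append_conv)
  obtain a where a: "a \<in> set s1" "k = f a" using h(2) ss by auto
  obtain b where b: "b \<in> set s2" "k' = f b" using h(3) ss by auto
  have "f k = a" using invk[of a] a ss by auto
  moreover have "f k' = b" using invk[of b] b ss by auto
  ultimately show "f k < f k'" using s ss a b by (auto simp: sorted_wrt_append)
next
  assume lt: "f k < f k'"
  have fk: "f k \<in> set s" using invk k by blast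
  then obtain s1 s2 where ss: "s = s1 @ f k # s2" by (meson split_list)
  have fk': "f k' \<in> set s" using invk sk by blast
  have "f k' \<notin> set s1" using s ss lt by (auto simp: sorted_wrt_append)
  hence "f k' \<in> set s2" using fk' ss lt by auto
  moreover have "f (f k) = k" "f (f k') = k'" using invk k sk by auto
  ultimately show "before (map f s) k k'" unfolding before_def
    by (rule_tac x="map f (s1 @ [f k])" in exI, rule_tac x="map f s2" in exI) (auto simp: ss intro: image_eqI[where x="f k'"])
qed




section \<open>Backward bumping\<close>

fun vb :: "nat \<Rightarrow> nat list list \<Rightarrow> bool" where
  "vb y [] = True"
| "vb y (c # cs) = ((\<exists>v\<in>set c. v < y) \<and> vb (Max {v \<in> set c. v < y}) cs)"

lemma Max_lt:
  assumes "\<exists>v\<in>set c. v < (y::nat)"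
  shows "Max {v \<in> set c. v < y} \<in> set c" "Max {v \<in> set c. v < y} < y"
    "\<And>v. v \<in> set c \<Longrightarrow> v < y \<Longrightarrow> v \<le> Max {v \<in> set c. v < y}"
proof -
  have ne: "{v \<in> set c. v < y} \<noteq> {}" using assms by auto
  have f: "finite {v \<in> set c. v < y}" by simp
  show "Max {v \<in> set c. v < y} \<in> set c" "Max {v \<in> set c. v < y} < y"
    using Max_in[OF f ne] by auto
  show "\<And>v. v \<in> set c \<Longrightarrow> v < y \<Longrightarrow> v \<le> Max {v \<in> set c. v < y}" using f by auto
qed

lemma bl_Cons: "bump_left y (c # cs) =
  (fst (bump_left (Max {v \<in> set c. v < y}) cs), repl (Max {v \<in> set c. v < y}) y c # snd (bump_left (Max {v \<in> set c. v < y}) cs))"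
  by (simp add: Let_def repl_def split: prod.splits)

lemma bl_basic:
  assumes "vb y R" "distinct (concat R)" "y \<notin> ent R"
  shows "length (snd (bump_left y R)) = length R \<and>
    ent (snd (bump_left y R)) = insert y (ent R) - {fst (bump_left y R)} \<and>
    fst (bump_left y R) \<in> insert y (ent R) \<and>
    distinct (concat (snd (bump_left y R))) \<and> fst (bump_left y R) \<le> y \<and>
    (R \<noteq> [] \<longrightarrow> fst (bump_left y R) < y)"
  using assms
proof (induction y R rule: bump_left.induct)
  case (1 y) then show ?case by simp
next
  case (2 y c cs)
  define z where "z = Max {v \<in> set c. v < y}"
  have ex: "\<exists>v\<in>set c. v < y" using 2 by simp
  have zc: "z \<in> set c" "z < y" "\<And>v. v \<in> set c \<Longrightarrow> v < y \<Longrightarrow> v \<le> z" using Max_lt[OF ex] z_def by auto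
  have vb': "vb z cs" using 2(2) z_def by simp
  have dc: "distinct c" "distinct (concat cs)" "set c \<inter> ent cs = {}" using 2(3) by (auto simp: tab_entries_def)
  have yc: "y \<notin> set c" "y \<notin> ent cs" using 2(4) by auto
  have zcs: "z \<notin> ent cs" using dc zc by auto
  obtain x ls where bl: "bump_left z cs = (x, ls)" by (metis surj_pair)
  have IH: "length ls = length cs \<and> ent ls = insert z (ent cs) - {x} \<and> x \<in> insert z (ent cs) \<and>
     distinct (concat ls) \<and> x \<le> z"
    using 2(1)[OF z_def vb' dc(2) zcs] bl by (simp add: z_def)
  have eq: "bump_left y (c # cs) = (x, repl z y c # ls)" using bl_Cons[of y c cs] bl z_def by simp
  have sr: "set (repl z y c) = insert y (set c - {z})" using set_repl[OF zc(1)] .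
  have dr: "distinct (repl z y c)" using distinct_repl dc yc by blast
  have xz: "x \<le> z" using IH by simp
  have "set (repl z y c) \<inter> ent ls = {}" using sr IH dc yc zc by auto
  moreover have "ent (repl z y c # ls) = insert y (ent (c # cs)) - {x}"
    using sr IH dc yc zc xz by auto
  ultimately show ?case using eq IH dr zc xz by (auto simp: tab_entries_def)
qed

definition ib :: "nat \<Rightarrow> nat list list \<Rightarrow> nat \<Rightarrow> int" where
  "ib y R v = (if v = y then -1 else int (colx v R))"
definition ia :: "nat \<Rightarrow> nat list list \<Rightarrow> nat \<Rightarrow> int" where
  "ia y R v = (if v = fst (bump_left y R) then int (length R) else int (colx v (snd (bump_left y R))))"

lemma bl_G:
  assumes "vb y R" "distinct (concat R)" "y \<notin> ent R"
    "k \<in> insert y (ent R)" "Suc k \<in> insert y (ent R)"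
  shows "(ia y R k \<le> ia y R (Suc k)) \<longleftrightarrow> (ib y R k \<le> ib y R (Suc k))"
  using assms
proof (induction y R rule: bump_left.induct)
  case (1 y) then show ?case by simp
next
  case (2 y c cs)
  define z where "z = Max {v \<in> set c. v < y}"
  have ex: "\<exists>v\<in>set c. v < y" using 2 by simp
  have zc: "z \<in> set c" "z < y" "\<And>v. v \<in> set c \<Longrightarrow> v < y \<Longrightarrow> v \<le> z" using Max_lt[OF ex] z_def by auto
  have vb': "vb z cs" using 2(2) z_def by simp
  have dc: "distinct c" "distinct (concat cs)" "set c \<inter> ent cs = {}" using 2(3) by (auto simp: tab_entries_def)
  have yc: "y \<notin> set c" "y \<notin> ent cs" using 2(4) by auto
  have zcs: "z \<notin> ent cs" using dc zc by auto
  obtain x ls where bl: "bump_left z cs = (x, ls)" by (metis surj_pair)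
  have bas: "length ls = length cs \<and> ent ls = insert z (ent cs) - {x} \<and> x \<in> insert z (ent cs) \<and> x \<le> z"
    using bl_basic[OF vb' dc(2) zcs] bl by simp
  have eq: "bump_left y (c # cs) = (x, repl z y c # ls)" using bl_Cons[of y c cs] bl z_def by simp
  have sr: "\<And>v. v \<in> set (repl z y c) \<longleftrightarrow> v = y \<or> (v \<in> set c \<and> v \<noteq> z)" using set_repl[OF zc(1)] by auto
  have IH: "\<lbrakk>k \<in> insert z (ent cs); Suc k \<in> insert z (ent cs)\<rbrakk> \<Longrightarrow>
      (ia z cs k \<le> ia z cs (Suc k)) \<longleftrightarrow> (ib z cs k \<le> ib z cs (Suc k))"
    using 2(1)[OF z_def vb' dc(2) zcs] by (simp add: z_def)
  have iaC: "\<And>v. ia y (c # cs) v = (if v = x then int (Suc (length cs)) else if v \<in> set (repl z y c) then 0 else 1 + int (colx v ls))"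
    unfolding ia_def using eq by simp
  have iacs: "\<And>v. ia z cs v = (if v = x then int (length cs) else int (colx v ls))"
    unfolding ia_def using bl by simp
  have ibC: "\<And>v. ib y (c # cs) v = (if v = y then -1 else if v \<in> set c then 0 else 1 + int (colx v cs))"
    unfolding ib_def by simp
  have ibcs: "\<And>v. ib z cs v = (if v = z then -1 else int (colx v cs))"
    unfolding ib_def by simp
  have xrep: "x \<notin> set (repl z y c)" using sr bas zc dc by auto
  have shift_a: "\<And>v. v \<in> insert z (ent cs) \<Longrightarrow> ia y (c # cs) v = 1 + ia z cs v"
  proof -
    fix v assume v: "v \<in> insert z (ent cs)"
    have "v \<notin> set (repl z y c)" using v sr dc zc yc by auto
    then show "ia y (c # cs) v = 1 + ia z cs v" using iaC iacs bas by auto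
  qed
  have shift_b: "\<And>v. v \<in> insert z (ent cs) \<Longrightarrow> ib y (c # cs) v = 1 + ib z cs v"
  proof -
    fix v assume v: "v \<in> insert z (ent cs)"
    show "ib y (c # cs) v = 1 + ib z cs v"
    proof (cases "v = z")
      case True then show ?thesis using ibC ibcs zc by auto
    next
      case False
      hence "v \<in> ent cs" "v \<noteq> y" using v yc by auto
      then show ?thesis using ibC ibcs dc False by auto
    qed
  qed
  have nonneg: "\<And>v. 0 \<le> ia y (c # cs) v" using iaC by simp
  have a_c: "\<And>v. v \<in> set c \<Longrightarrow> v \<noteq> z \<Longrightarrow> ia y (c # cs) v = 0" using iaC sr xrep by auto
  have a_y: "ia y (c # cs) y = 0" using iaC sr xrep by auto
  have b_c: "\<And>v. v \<in> set c \<Longrightarrow> ib y (c # cs) v = 0" using ibC yc by auto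
  have b_cs: "\<And>v. v \<in> ent cs \<Longrightarrow> 1 \<le> ib y (c # cs) v" using ibC yc dc by auto
  have a_cs: "\<And>v. v \<in> ent cs \<Longrightarrow> 1 \<le> ia y (c # cs) v" using shift_a iacs by fastforce
  have kin: "k \<in> insert y (set c \<union> ent cs)" "Suc k \<in> insert y (set c \<union> ent cs)" using 2(5,6) by auto
  show ?case
  proof (cases "k = y")
    case True
    hence "ib y (c # cs) k = -1" using ibC by simp
    moreover have "ib y (c # cs) (Suc k) \<ge> 0" using ibC True by simp
    ultimately show ?thesis using a_y True nonneg by simp
  next
    case kny: False
    show ?thesis
    proof (cases "Suc k = y")
      case True
      hence b1: "ib y (c # cs) (Suc k) = -1" using ibC by simp
      have b2: "ib y (c # cs) k \<ge> 0" using ibC kny by simp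
      have "1 \<le> ia y (c # cs) k"
      proof (cases "k \<in> set c")
        case True
        have "k \<le> z" using zc(3)[OF True] \<open>Suc k = y\<close> by simp
        hence "z = k" using zc(2) \<open>Suc k = y\<close> by simp
        then show ?thesis using shift_a[of k] iacs by (simp; smt (verit))
      next
        case False
        hence "k \<in> ent cs" using kin kny by simp
        then show ?thesis using a_cs by simp
      qed
      then show ?thesis using True a_y b1 b2 by simp
    next
      case skny: False
      have kk: "k \<in> set c \<union> ent cs" "Suc k \<in> set c \<union> ent cs" using kin kny skny by auto
      consider "k \<in> set c \<and> Suc k \<in> set c" | "k \<in> set c \<and> Suc k \<in> ent cs" | "k \<in> ent cs \<and> Suc k \<in> set c"
        | "k \<in> ent cs \<and> Suc k \<in> ent cs" using kk by blast
      then show ?thesis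
      proof cases
        case 1
        have "z \<noteq> k"
        proof
          assume "z = k"
          have "\<not> Suc k < y" using zc(3)[of "Suc k"] 1 \<open>z = k\<close> by auto
          then show False using zc(2) \<open>z = k\<close> skny by simp
        qed
        hence "ia y (c # cs) k = 0" using a_c 1 by simp
        then show ?thesis using b_c 1 nonneg by simp
      next
        case 2
        have b: "ib y (c # cs) k \<le> ib y (c # cs) (Suc k)" using b_c[of k] b_cs[of "Suc k"] 2 by simp
        have "ia y (c # cs) k \<le> ia y (c # cs) (Suc k)"
        proof (cases "z = k")
          case True
          have "(ia z cs k \<le> ia z cs (Suc k)) \<longleftrightarrow> (ib z cs k \<le> ib z cs (Suc k))" using IH 2 True by simp
          moreover have "ib z cs k \<le> ib z cs (Suc k)" using ibcs True by simp
          ultimately show ?thesis using shift_a 2 True by simp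
        next
          case False
          then show ?thesis using a_c 2 nonneg by simp
        qed
        then show ?thesis using b by simp
      next
        case 3
        have b: "\<not> ib y (c # cs) k \<le> ib y (c # cs) (Suc k)" using b_c b_cs 3 by fastforce
        have "\<not> ia y (c # cs) k \<le> ia y (c # cs) (Suc k)"
        proof (cases "z = Suc k")
          case True
          have "(ia z cs k \<le> ia z cs (Suc k)) \<longleftrightarrow> (ib z cs k \<le> ib z cs (Suc k))" using IH 3 True by simp
          moreover have "\<not> ib z cs k \<le> ib z cs (Suc k)" using ibcs True 3 zcs by auto
          ultimately show ?thesis using shift_a 3 True by simp
        next
          case False
          then show ?thesis using a_c 3 a_cs by fastforce
        qed
        then show ?thesis using b by simp
      next
        case 4
        have "k \<in> insert z (ent cs)" "Suc k \<in> insert z (ent cs)" using 4 by auto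
        then show ?thesis using IH shift_a shift_b by simp
      qed
    qed
  qed
qed




lemma distinct_rev_concat: "distinct (concat (rev L)) \<longleftrightarrow> distinct (concat L)"
proof (induction L)
  case Nil then show ?case by simp
next
  case (Cons c L)
  have "set (concat (rev L)) = set (concat L)" by simp
  then show ?case using Cons by auto
qed

lemma wf_append: "wft (X @ Y) \<longleftrightarrow> wft X \<and> wft Y \<and> ent X \<inter> ent Y = {} \<and> (X \<noteq> [] \<and> Y \<noteq> [] \<longrightarrow> domc (last X) (hd Y))"
proof (induction X)
  case Nil then show ?case by simp
next
  case (Cons c X)
  show ?case
  proof (cases X)
    case Nil
    then show ?thesis using wf_Cons[of c Y] by (auto simp: wf_Cons)
  next
    case (Cons d X')
    have "wft ((c # X) @ Y) = (sorted_wrt (<) c \<and> wft (X @ Y) \<and> set c \<inter> ent (X @ Y) = {} \<and> domc c (hd (X @ Y)))"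
      using wf_Cons[of c "X @ Y"] Cons by simp
    also have "\<dots> = (sorted_wrt (<) c \<and> (wft X \<and> wft Y \<and> ent X \<inter> ent Y = {} \<and> (X \<noteq> [] \<and> Y \<noteq> [] \<longrightarrow> domc (last X) (hd Y)))
       \<and> set c \<inter> ent (X @ Y) = {} \<and> domc c (hd X))" using Cons.IH Cons by simp
    also have "\<dots> = (wft (c # X) \<and> wft Y \<and> ent (c # X) \<inter> ent Y = {} \<and> (c # X \<noteq> [] \<and> Y \<noteq> [] \<longrightarrow> domc (last (c # X)) (hd Y)))"
      using wf_Cons[of c X] Cons by auto
    finally show ?thesis .
  qed
qed

lemma wf_rev_Cons: "wft (rev (c # cs)) \<longleftrightarrow> wft (rev cs) \<and> sorted_wrt (<) c \<and> set c \<inter> ent cs = {} \<and> (cs \<noteq> [] \<longrightarrow> domc (hd cs) c)"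
proof -
  have "ent (rev cs) = ent cs" by (simp add: tab_entries_def)
  moreover have "cs \<noteq> [] \<Longrightarrow> last (rev cs) = hd cs" by (simp add: last_rev)
  ultimately show ?thesis using wf_append[of "rev cs" "[c]"] wf_Cons[of c "[]"] by auto
qed

lemma pair_del:
  fixes A B B' :: "nat set"
  assumes fA: "finite A" and fB: "finite B"
    and dm: "\<forall>t. cle B t \<le> cnt A t"
    and yB: "y \<in> B" and zA: "z \<in> A" and zy: "z < y" and zmax: "\<forall>v\<in>A. v < y \<longrightarrow> v \<le> z" and yA: "y \<notin> A"
    and Bc: "B' = B - {y} \<or> (\<exists>w. B' = insert w (B - {y}) \<and> y < w \<and> w \<notin> B)"
  shows "\<forall>t. cle B' t \<le> cnt (insert y (A - {z})) t"
proof
  fix t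
  have fA': "finite (A - {z})" using fA by simp
  have cA: "cnt (insert y (A - {z})) t = cnt (A - {z}) t + (if y < t then 1 else 0)"
    using cnt_ins[OF fA', of y t] yA by simp
  have cA2: "cnt (A - {z}) t + (if z < t then 1 else 0) = cnt A t" using cnt_del[OF fA zA] by simp
  have cB2: "cle (B - {y}) t + (if y \<le> t then 1 else 0) = cle B t" using cle_del[OF fB yB] by simp
  have cB': "cle B' t \<le> cle (B - {y}) t + (if y < t then 1 else 0)"
    using Bc
  proof
    assume "B' = B - {y}" then show ?thesis by simp
  next
    assume "\<exists>w. B' = insert w (B - {y}) \<and> y < w \<and> w \<notin> B"
    then obtain w where h: "B' = insert w (B - {y})" "y < w" "w \<notin> B" by blast
    have "cle B' t = cle (B - {y}) t + (if w \<le> t then 1 else 0)" using cle_ins[of "B - {y}" w t] fB h by simp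
    then show ?thesis using h(2) by auto
  qed
  have dt: "cle B t \<le> cnt A t" using dm by blast
  show "cle B' t \<le> cnt (insert y (A - {z})) t"
  proof (cases "t \<le> z")
    case True
    then show ?thesis using cA cA2 cB2 cB' dt zy by auto
  next
    case False
    show ?thesis
    proof (cases "t < y")
      case True
      have g: "cnt A y = cnt A t"
        by (rule cnt_gap) (use zmax False True in \<open>auto simp: not_le\<close>)
      have "cle B t \<le> cnt B y" using cle_cnt_lt[OF fB True] .
      moreover have "cle B y = cnt B y + 1" using cle_cnt[OF fB, of y] yB by simp
      moreover have "cle B y \<le> cnt A y" using dm by blast
      ultimately show ?thesis using cA cA2 cB2 cB' g False True by simp
    next
      case False
      then show ?thesis using cA cA2 cB2 cB' dt \<open>\<not> t \<le> z\<close> by (cases "t = y") auto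
    qed
  qed
qed

lemma bl_wf:
  assumes "vb y R" "wft (rev R)" "y \<notin> ent R" "y \<in> B" "finite B"
    "R \<noteq> [] \<longrightarrow> (\<forall>t. cle B t \<le> cnt (set (hd R)) t)"
    "B' = B - {y} \<or> (\<exists>w. B' = insert w (B - {y}) \<and> y < w \<and> w \<notin> B)"
  shows "wft (rev (snd (bump_left y R))) \<and> (R \<noteq> [] \<longrightarrow> (\<forall>t. cle B' t \<le> cnt (set (hd (snd (bump_left y R)))) t))"
  using assms
proof (induction y R arbitrary: B B' rule: bump_left.induct)
  case (1 y) then show ?case by simp
next
  case (2 y c cs)
  define z where "z = Max {v \<in> set c. v < y}"
  have ex: "\<exists>v\<in>set c. v < y" using 2 by simp
  have zc: "z \<in> set c" "z < y" "\<And>v. v \<in> set c \<Longrightarrow> v < y \<Longrightarrow> v \<le> z" using Max_lt[OF ex] z_def by auto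
  have vb': "vb z cs" using 2(2) z_def by simp
  have wr: "wft (rev cs)" "sorted_wrt (<) c" "set c \<inter> ent cs = {}" "cs \<noteq> [] \<longrightarrow> domc (hd cs) c"
    using 2(3) wf_rev_Cons by auto
  have yc: "y \<notin> set c" "y \<notin> ent cs" using 2(4) by auto
  have zcs: "z \<notin> ent cs" using wr zc by auto
  obtain x ls where bl: "bump_left z cs = (x, ls)" by (metis surj_pair)
  have eq: "bump_left y (c # cs) = (x, repl z y c # ls)" using bl_Cons[of y c cs] bl z_def by simp
  have sr: "set (repl z y c) = insert y (set c - {z})" using set_repl[OF zc(1)] .
  have sorted_r: "sorted_wrt (<) (repl z y c)"
  proof (rule sorted_repl[OF wr(2) yc(1) _ zc(1)])
    fix v assume v: "v \<in> set c" "v \<noteq> z"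
    show "(v < z) = (v < y)"
    proof
      assume "v < z" then show "v < y" using zc(2) by simp
    next
      assume "v < y" then show "v < z" using zc(3)[OF v(1)] v(2) by simp
    qed
  qed
  have Bnew: "set (repl z y c) = set c - {z} \<or> (\<exists>w. set (repl z y c) = insert w (set c - {z}) \<and> z < w \<and> w \<notin> set c)"
    using sr zc yc by blast
  have dcs: "cs \<noteq> [] \<longrightarrow> (\<forall>t. cle (set c) t \<le> cnt (set (hd cs)) t)" using wr(4) unfolding domc_def by blast
  have IH: "wft (rev ls) \<and> (cs \<noteq> [] \<longrightarrow> (\<forall>t. cle (set (repl z y c)) t \<le> cnt (set (hd ls)) t))"
    using 2(1)[OF z_def vb' wr(1) zcs zc(1) _ dcs Bnew] bl by simp
  have pr: "\<forall>t. cle B' t \<le> cnt (insert y (set c - {z})) t"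
    by (rule pair_del[OF _ 2(6) _ 2(5) zc(1) zc(2) _ yc(1) 2(8)]) (use 2(7) zc(3) in auto)
  have bas: "ent ls = insert z (ent cs) - {x}" using bl_basic[OF vb' _ zcs] wr(1) wf_distinct bl
    by (metis (no_types, lifting) distinct_rev_concat fst_conv snd_conv)
  have disj: "set (repl z y c) \<inter> ent ls = {}" using sr bas wr(3) yc zc by auto
  have lsne: "ls \<noteq> [] \<longrightarrow> domc (hd ls) (repl z y c)" using IH bl_basic[OF vb'] bl unfolding domc_def
    by (metis length_0_conv snd_conv wr(1) wf_distinct distinct_rev_concat zcs)
  have "wft (rev (repl z y c # ls))" using wf_rev_Cons IH sorted_r disj lsne by blast
  then show ?case using eq pr sr by simp
qed

lemma vb_from_wf: "wft (rev R) \<Longrightarrow> (R \<noteq> [] \<longrightarrow> (\<exists>v\<in>set (hd R). v < y)) \<Longrightarrow> vb y R"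
proof (induction y R rule: vb.induct)
  case (1 y) then show ?case by simp
next
  case (2 y c cs)
  define z where "z = Max {v \<in> set c. v < y}"
  have ex: "\<exists>v\<in>set c. v < y" using 2 by simp
  have zc: "z \<in> set c" "z < y" using Max_lt[OF ex] z_def by auto
  have wr: "wft (rev cs)" "cs \<noteq> [] \<longrightarrow> domc (hd cs) c" using 2(2) wf_rev_Cons by auto
  have "cs \<noteq> [] \<longrightarrow> (\<exists>v\<in>set (hd cs). v < z)"
  proof
    assume ne: "cs \<noteq> []"
    have "cle (set c) z \<le> cnt (set (hd cs)) z" using wr(2) ne unfolding domc_def by blast
    moreover have "1 \<le> cle (set c) z"
    proof -
      have "{z} \<subseteq> {v \<in> set c. v \<le> z}" using zc by auto
      hence "card {z} \<le> card {v \<in> set c. v \<le> z}" by (intro card_mono) auto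
      then show ?thesis by (simp add: cle_def)
    qed
    ultimately have "{v \<in> set (hd cs). v < z} \<noteq> {}" unfolding cnt_def by (metis card.empty not_one_le_zero le_trans)
    then show "\<exists>v\<in>set (hd cs). v < z" by blast
  qed
  then show ?case using 2(1)[OF wr(1)] ex z_def by simp
qed

lemma bl_append: "bump_left y (R1 @ R2) =
  (fst (bump_left (fst (bump_left y R1)) R2), snd (bump_left y R1) @ snd (bump_left (fst (bump_left y R1)) R2))"
  by (induction y R1 rule: bump_left.induct) (simp_all del: bump_left.simps(2) add: bl_Cons)

lemma vb_append: "vb y (R1 @ R2) \<Longrightarrow> vb y R1 \<and> vb (fst (bump_left y R1)) R2"
  by (induction y R1 rule: bump_left.induct) (simp_all del: bump_left.simps(2) add: bl_Cons)

lemma lemmaA: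
  assumes "vb y R" "vb y' (snd (bump_left y R))" "y' < y" "y \<notin> ent R" "distinct (concat R)"
  shows "fst (bump_left y' (snd (bump_left y R))) < fst (bump_left y R)"
  using assms
proof (induction y R arbitrary: y' rule: bump_left.induct)
  case (1 y) then show ?case by simp
next
  case (2 y c cs)
  define z where "z = Max {v \<in> set c. v < y}"
  have ex: "\<exists>v\<in>set c. v < y" using 2 by simp
  have zc: "z \<in> set c" "z < y" "\<And>v. v \<in> set c \<Longrightarrow> v < y \<Longrightarrow> v \<le> z" using Max_lt[OF ex] z_def by auto
  have vb': "vb z cs" using 2(2) z_def by simp
  have dc: "distinct (concat cs)" "set c \<inter> ent cs = {}" using 2(6) by (auto simp: tab_entries_def)
  have yc: "y \<notin> set c" using 2(5) by auto
  have zcs: "z \<notin> ent cs" using dc zc by auto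
  obtain x ls where bl: "bump_left z cs = (x, ls)" by (metis surj_pair)
  have eq: "bump_left y (c # cs) = (x, repl z y c # ls)" using bl_Cons[of y c cs] bl z_def by simp
  define z' where "z' = Max {v \<in> set (repl z y c). v < y'}"
  have ex': "\<exists>v\<in>set (repl z y c). v < y'" using 2(3) eq by simp
  have zc': "z' \<in> set (repl z y c)" "z' < y'" using Max_lt[OF ex'] z'_def by auto
  have "z' \<noteq> y" using zc' 2(4) by simp
  hence "z' \<in> set c" "z' \<noteq> z" using zc' set_repl[OF zc(1)] by auto
  hence zz: "z' < z" using zc(3)[of z'] zc' 2(4) by fastforce
  have vb2: "vb z' ls" using 2(3) eq z'_def by simp
  have "fst (bump_left z' ls) < x" using 2(1)[OF z_def vb', of z'] bl vb2 zz zcs dc by simp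
  moreover have "bump_left y' (repl z y c # ls) = (fst (bump_left z' ls), repl z' y' (repl z y c) # snd (bump_left z' ls))"
    using bl_Cons[of y' "repl z y c" ls] z'_def by simp
  ultimately show ?case using eq by simp
qed

lemma lemmaB:
  assumes "vb y R" "vb y' (snd (bump_left y R))" "y < y'" "y \<notin> ent R" "distinct (concat R)"
  shows "fst (bump_left y R) < fst (bump_left y' (snd (bump_left y R)))"
  using assms
proof (induction y R arbitrary: y' rule: bump_left.induct)
  case (1 y) then show ?case by simp
next
  case (2 y c cs)
  define z where "z = Max {v \<in> set c. v < y}"
  have ex: "\<exists>v\<in>set c. v < y" using 2 by simp
  have zc: "z \<in> set c" "z < y" "\<And>v. v \<in> set c \<Longrightarrow> v < y \<Longrightarrow> v \<le> z" using Max_lt[OF ex] z_def by auto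
  have vb': "vb z cs" using 2(2) z_def by simp
  have dc: "distinct (concat cs)" "set c \<inter> ent cs = {}" using 2(6) by (auto simp: tab_entries_def)
  have zcs: "z \<notin> ent cs" using dc zc by auto
  obtain x ls where bl: "bump_left z cs = (x, ls)" by (metis surj_pair)
  have eq: "bump_left y (c # cs) = (x, repl z y c # ls)" using bl_Cons[of y c cs] bl z_def by simp
  define z' where "z' = Max {v \<in> set (repl z y c). v < y'}"
  have ex': "\<exists>v\<in>set (repl z y c). v < y'" using 2(3) eq by simp
  have yin: "y \<in> set (repl z y c)" using set_repl[OF zc(1)] by simp
  have "y \<le> z'" using Max_lt(3)[OF ex' yin 2(4)] z'_def by simp
  hence zz: "z < z'" using zc(2) by simp
  have vb2: "vb z' ls" using 2(3) eq z'_def by simp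
  have "x < fst (bump_left z' ls)" using 2(1)[OF z_def vb', of z'] bl vb2 zz zcs dc by simp
  moreover have "bump_left y' (repl z y c # ls) = (fst (bump_left z' ls), repl z' y' (repl z y c) # snd (bump_left z' ls))"
    using bl_Cons[of y' "repl z y c" ls] z'_def by simp
  ultimately show ?case using eq by simp
qed




lemma colx_append: "colx v (X @ Y) = (if v \<in> ent X then colx v X else length X + colx v Y)"
  by (induction X) auto

lemma colx_rev: "distinct (concat L) \<Longrightarrow> v \<in> ent L \<Longrightarrow> colx v (rev L) = length L - 1 - colx v L"
proof -
  assume d: "distinct (concat L)" and v: "v \<in> ent L"
  have b: "colx v L < length L" "v \<in> set (L ! colx v L)" using colx_bound[OF v] by auto
  have "rev L ! (length L - 1 - colx v L) = L ! colx v L" using b(1) by (simp add: rev_nth)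
  moreover have "distinct (concat (rev L))" using d distinct_rev_concat by blast
  ultimately show ?thesis using colx_nth[of "rev L" "length L - 1 - colx v L" v] b by simp
qed

lemma bl_lengths: "map length (snd (bump_left y R)) = map length R"
  by (induction y R rule: bump_left.induct) (simp_all del: bump_left.simps(2) add: bl_Cons)

definition corner :: "nat list list \<Rightarrow> nat \<Rightarrow> nat \<Rightarrow> bool" where
  "corner T i j \<longleftrightarrow> j < length T \<and> Suc i = length (T!j) \<and> (Suc j < length T \<longrightarrow> length (T!Suc j) \<le> i)"

lemma col_del_struct:
  assumes "corner T i j"
  shows "col_del T (i, j) = (fst (bump_left (last (T!j)) (rev (take j T))),
            rev (snd (bump_left (last (T!j)) (rev (take j T)))) @ butlast (T!j) # drop (Suc j) T)"
proof -
  have l: "Suc i = length (T!j)" using assms by (simp add: corner_def)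
  hence y: "T!j!i = last (T!j)" by (metis diff_Suc_1 last_conv_nth length_greater_0_conv zero_less_Suc)
  have c: "take i (T!j) @ drop (Suc i) (T!j) = butlast (T!j)" using l by (simp add: butlast_conv_take flip: l)
  show ?thesis unfolding col_del_def using y c by (simp add: Let_def split: prod.splits)
qed

lemma wf_len_mono: "wft T \<Longrightarrow> m \<le> n \<Longrightarrow> n < length T \<Longrightarrow> length (T!n) \<le> length (T!m)"
proof -
  assume w: "wft T" and mn: "m \<le> n" "n < length T"
  show ?thesis
  proof (cases "m = n")
    case False
    hence "domc (T!m) (T!n)" using wf_domc_lt[OF w] mn by simp
    hence "card (set (T!n)) \<le> card (set (T!m))" by (rule domc_card)
    moreover have "distinct (T!n)" "distinct (T!m)" using w mn wf_sorted strict_sorted_iff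
      by (metis le_less_trans nth_mem)+
    ultimately show ?thesis by (simp add: distinct_card)
  qed simp
qed

lemma wf_take: "wft T \<Longrightarrow> wft (take j T)" using wf_append[of "take j T" "drop j T"] by simp
lemma wf_drop: "wft T \<Longrightarrow> wft (drop j T)" using wf_append[of "take j T" "drop j T"] by simp

locale cdel =
  fixes T :: "nat list list" and i j :: nat
  assumes w: "wft T" and cor: "corner T i j"
begin

definition "C = T!j"
definition "A = take j T"
definition "B0 = drop (Suc j) T"
definition "y = last C"
definition "R = rev A"
definition "x = fst (bump_left y R)"
definition "ls = snd (bump_left y R)"
definition "T' = rev ls @ butlast C # B0"

lemma jl: "j < length T" using cor by (simp add: corner_def)
lemma lenC: "length C = Suc i" using cor by (simp add: corner_def C_def)
lemma Tdec: "T = A @ C # B0" unfolding A_def C_def B0_def using jl by (simp add: id_take_nth_drop)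
lemma lenA: "length A = j" using jl by (simp add: A_def)
lemma lenR: "length R = j" using lenA by (simp add: R_def)
lemma CD: "col_del T (i, j) = (x, T')" using col_del_struct[OF cor] unfolding x_def T'_def ls_def y_def R_def A_def C_def B0_def by simp

lemma wfA: "wft A" and wfCB: "wft (C # B0)" and disjACB: "ent A \<inter> ent (C # B0) = {}"
  and domAC: "A \<noteq> [] \<longrightarrow> domc (last A) C"
proof -
  have "wft (A @ C # B0)" using w by (simp only: Tdec[symmetric])
  then show "wft A" "wft (C # B0)" "ent A \<inter> ent (C # B0) = {}" "A \<noteq> [] \<longrightarrow> domc (last A) C"
    using wf_append[of A "C # B0"] by auto
qed
lemma sC: "sorted_wrt (<) C" and wfB0: "wft B0" and disjCB: "set C \<inter> ent B0 = {}" and domCB: "B0 \<noteq> [] \<longrightarrow> domc C (hd B0)"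
  using wfCB wf_Cons by auto
lemma distC: "distinct C" using sC strict_sorted_iff by blast
lemma Cne: "C \<noteq> []" using lenC by auto
lemma yC: "y \<in> set C" using Cne by (simp add: y_def)
lemma C_split: "C = butlast C @ [y]" using Cne by (simp add: y_def)
lemma dC2: "distinct (butlast C @ [y])" by (simp only: C_split[symmetric] distC)
lemma sC2: "sorted_wrt (<) (butlast C @ [y])" by (simp only: C_split[symmetric] sC)
lemma setC2: "set C = insert y (set (butlast C))"
proof -
  have "set (butlast C @ [y]) = insert y (set (butlast C))" by simp
  then show ?thesis by (simp only: C_split[symmetric])
qed
lemma butC: "set (butlast C) = set C - {y}" using dC2 setC2 by auto
lemma ymax: "\<And>v. v \<in> set C \<Longrightarrow> v \<le> y"
proof -
  fix v assume "v \<in> set C"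
  hence "v = y \<or> v \<in> set (butlast C)" using setC2 by simp
  then show "v \<le> y" using sC2 by (auto simp: sorted_wrt_append less_imp_le)
qed
lemma sbC: "sorted_wrt (<) (butlast C)" using sC2 by (simp add: sorted_wrt_append)
lemma lenB0: "B0 \<noteq> [] \<longrightarrow> length (hd B0) \<le> i"
  using cor jl unfolding corner_def B0_def by (simp add: hd_drop_conv_nth)

lemma wfR: "wft (rev R)" using wfA by (simp add: R_def)
lemma entR: "ent R = ent A" by (simp add: R_def tab_entries_def)
lemma distR: "distinct (concat R)" using wfA wf_distinct distinct_rev_concat by (simp add: R_def)
lemma yR: "y \<notin> ent R" using disjACB yC entR by auto

lemma vbR: "vb y R"
proof (rule vb_from_wf[OF wfR])
  show "R \<noteq> [] \<longrightarrow> (\<exists>v\<in>set (hd R). v < y)"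
  proof
    assume "R \<noteq> []"
    hence An: "A \<noteq> []" by (simp add: R_def)
    have hd: "hd R = last A" using An by (simp add: R_def hd_rev)
    have d: "cle (set C) y \<le> cnt (set (last A)) y" using domAC An unfolding domc_def by blast
    have "1 \<le> cle (set C) y"
    proof -
      have "{y} \<subseteq> {v \<in> set C. v \<le> y}" using yC by auto
      hence "card {y} \<le> card {v \<in> set C. v \<le> y}" by (intro card_mono) auto
      then show ?thesis by (simp add: cle_def)
    qed
    hence "{v \<in> set (last A). v < y} \<noteq> {}" using d unfolding cnt_def by (metis card.empty not_one_le_zero le_trans)
    then show "\<exists>v\<in>set (hd R). v < y" unfolding hd by auto
  qed
qed

lemma bas: "length ls = length R \<and> ent ls = insert y (ent R) - {x} \<and> x \<in> insert y (ent R) \<and>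
    distinct (concat ls) \<and> x \<le> y"
  using bl_basic[OF vbR distR yR] unfolding ls_def x_def by simp

lemma entT: "ent T = ent A \<union> set C \<union> ent B0"
proof -
  have "ent (A @ C # B0) = ent T" by (simp only: Tdec[symmetric])
  then show ?thesis by (simp add: Un_assoc)
qed
lemma xT: "x \<in> ent T"
proof -
  have "x \<in> insert y (ent A)" using bas entR by simp
  hence "x = y \<or> x \<in> ent A" by simp
  then show ?thesis unfolding entT using yC by (metis UnI1 UnI2)
qed

lemma entT': "ent T' = ent T - {x}"
proof -
  have "ent T' = ent ls \<union> set (butlast C) \<union> ent B0" by (simp add: T'_def tab_entries_def Un_assoc Un_left_commute)
  also have "\<dots> = (insert y (ent A) - {x}) \<union> (set C - {y}) \<union> ent B0" using bas entR butC by simp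
  also have "\<dots> = ent T - {x}"
  proof -
    have "x \<notin> set C - {y}" using bas entR disjACB by auto
    moreover have "x \<notin> ent B0" using bas entR disjACB disjCB yC by auto
    ultimately show ?thesis unfolding entT using yC by blast
  qed
  finally show ?thesis .
qed

lemma wfT': "wft T'"
proof -
  have bw: "wft (rev ls) \<and> (R \<noteq> [] \<longrightarrow> (\<forall>t. cle (set C - {y}) t \<le> cnt (set (hd ls)) t))"
  proof -
    have "R \<noteq> [] \<longrightarrow> (\<forall>t. cle (set C) t \<le> cnt (set (hd R)) t)"
      using domAC unfolding domc_def R_def by (simp add: hd_rev)
    moreover have "set C - {y} = set C - {y} \<or> (\<exists>w. set C - {y} = insert w (set C - {y}) \<and> y < w \<and> w \<notin> set C)" by (rule disjI1) (rule refl)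
    ultimately have "wft (rev (snd (bump_left y R))) \<and> (R \<noteq> [] \<longrightarrow> (\<forall>t. cle (set C - {y}) t \<le> cnt (set (hd (snd (bump_left y R)))) t))"
      by (rule bl_wf[OF vbR wfR yR yC finite_set])
    then show ?thesis unfolding ls_def .
  qed
  have w2: "wft (butlast C # B0)"
  proof -
    have "B0 \<noteq> [] \<longrightarrow> domc (butlast C) (hd B0)"
    proof
      assume ne: "B0 \<noteq> []"
      have dm: "domc C (hd B0)" using domCB ne by simp
      have lh: "length (hd B0) \<le> i" using lenB0 ne by simp
      have dh: "distinct (hd B0)" using wfB0 ne wf_sorted strict_sorted_iff by (metis list.set_sel(1))
      show "domc (butlast C) (hd B0)" unfolding domc_def
      proof
        fix t
        show "cle (set (hd B0)) t \<le> cnt (set (butlast C)) t"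
        proof (cases "y < t")
          case True
          have "\<forall>v\<in>set C - {y}. v < t" using True ymax le_less_trans by blast
          hence "cnt (set C - {y}) t = card (set C - {y})" by (intro cnt_all) simp_all
          moreover have "card (set C - {y}) = i" using lenC distC yC by (simp add: distinct_card)
          moreover have "cle (set (hd B0)) t \<le> length (hd B0)" using cle_card[of "set (hd B0)" t] dh by (simp add: distinct_card)
          ultimately show ?thesis using lh butC by simp
        next
          case False
          have "cnt (set C - {y}) t + 0 = cnt (set C) t" using cnt_del[of "set C" y t] yC False by simp
          then show ?thesis using dm butC unfolding domc_def by simp
        qed
      qed
    qed
    moreover have "set (butlast C) \<inter> ent B0 = {}" using butC disjCB by auto
    ultimately show ?thesis using wf_Cons sbC wfB0 by simp
  qed
  have disj: "ent (rev ls) \<inter> ent (butlast C # B0) = {}"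
  proof -
    have "ent (rev ls) = insert y (ent A) - {x}" using bas entR by (simp add: tab_entries_def)
    then show ?thesis using butC disjACB disjCB yC by auto
  qed
  have dm: "rev ls \<noteq> [] \<longrightarrow> domc (last (rev ls)) (butlast C)"
  proof
    assume "rev ls \<noteq> []"
    hence ne: "ls \<noteq> []" by simp
    hence "R \<noteq> []" using bas by (metis length_0_conv)
    hence "\<forall>t. cle (set C - {y}) t \<le> cnt (set (hd ls)) t" using bw by blast
    moreover have "last (rev ls) = hd ls" using ne by (simp add: last_rev)
    ultimately show "domc (last (rev ls)) (butlast C)" unfolding domc_def butC by simp
  qed
  have "wft (rev ls) \<and> wft (butlast C # B0) \<and> ent (rev ls) \<inter> ent (butlast C # B0) = {} \<and>
     (rev ls \<noteq> [] \<and> butlast C # B0 \<noteq> [] \<longrightarrow> domc (last (rev ls)) (hd (butlast C # B0)))"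
    using bw w2 disj dm by (intro conjI) simp_all
  then show ?thesis unfolding T'_def using wf_append[of "rev ls" "butlast C # B0"] by (rule_tac iffD2) auto
qed

lemma lls: "length ls = j" using bas lenR by simp
lemma lenT': "length T' = length T"
proof -
  have "length (A @ C # B0) = length T" by (simp only: Tdec[symmetric])
  hence "length T = j + Suc (length B0)" using lenA by simp
  moreover have "length T' = length ls + Suc (length B0)" by (simp add: T'_def)
  ultimately show ?thesis using lls by simp
qed

lemma T'_nth_lt: "c < j \<Longrightarrow> T'!c = rev ls ! c" using lls by (simp add: T'_def nth_append)
lemma T'_nth_j: "T'!j = butlast C" using lls by (simp add: T'_def nth_append)
lemma T'_nth_gt: "j < c \<Longrightarrow> T'!c = B0 ! (c - Suc j)" using lls by (simp add: T'_def nth_append)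
lemma T_nth_lt: "c < j \<Longrightarrow> T!c = A ! c"
proof -
  assume c: "c < j"
  have "(A @ C # B0)!c = T!c" by (simp only: Tdec[symmetric])
  then show ?thesis using c lenA by (simp add: nth_append)
qed
lemma T_nth_gt: "j < c \<Longrightarrow> T!c = B0 ! (c - Suc j)"
proof -
  assume c: "j < c"
  have "(A @ C # B0)!c = T!c" by (simp only: Tdec[symmetric])
  then show ?thesis using c lenA by (simp add: nth_append)
qed

lemma lencols: "c < length T \<Longrightarrow> length (T'!c) = (if c = j then i else length (T!c))"
proof -
  assume c: "c < length T"
  have ml: "map length ls = map length R" using bl_lengths unfolding ls_def by simp
  consider "c < j" | "c = j" | "j < c" by linarith
  then show "length (T'!c) = (if c = j then i else length (T!c))"
  proof cases
    case 1
    have "length (rev ls ! c) = length (rev R ! c)"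
    proof -
      have "map length (rev ls) = map length (rev R)" using ml by (simp add: rev_map[symmetric])
      then show ?thesis using 1 lls lenR by (metis length_map length_rev nth_map)
    qed
    then show ?thesis using 1 T'_nth_lt T_nth_lt by (simp add: R_def)
  next
    case 2
    then show ?thesis using T'_nth_j lenC by simp
  next
    case 3
    then show ?thesis using T'_nth_gt T_nth_gt by simp
  qed
qed

lemma entls: "ent ls = insert y (ent A) - {x}" using bas entR by simp
lemma dls: "distinct (concat ls)" using bas by simp
lemma xR: "x \<in> insert y (ent A)" using bas entR by simp
lemma yA: "y \<notin> ent A" using yR entR by simp
lemma distT: "distinct (concat T)" using w wf_distinct by blast
lemma distT': "distinct (concat T')" using wfT' wf_distinct by blast

lemma colxT: "colx v T = colx v (A @ C # B0)" by (simp only: Tdec[symmetric])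

lemma colxT_A: "v \<in> ent A \<Longrightarrow> int (colx v T) = int j - 1 - ib y R v"
proof -
  assume v: "v \<in> ent A"
  have vy: "v \<noteq> y" using v yA by auto
  have "colx v T = colx v A" using colxT v by (simp add: colx_append)
  also have "\<dots> = colx v (rev R)" by (simp add: R_def)
  also have "\<dots> = length R - 1 - colx v R" using colx_rev[OF distR] v entR by simp
  finally have "colx v T = j - 1 - colx v R" using lenR by simp
  moreover have "colx v R < j" using colx_bound[of v R] v entR lenR by simp
  ultimately show ?thesis using vy by (simp add: ib_def of_nat_diff)
qed

lemma colxT_C: "v \<in> set C \<Longrightarrow> colx v T = j"
proof -
  assume v: "v \<in> set C"
  have "v \<notin> ent A" using v disjACB by auto
  then show ?thesis using colxT v lenA by (simp add: colx_append)
qed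

lemma colxT_B: "v \<in> ent B0 \<Longrightarrow> colx v T = j + 1 + colx v B0"
proof -
  assume v: "v \<in> ent B0"
  have "v \<notin> ent A" "v \<notin> set C" using v disjACB disjCB by auto
  then show ?thesis using colxT v lenA by (simp add: colx_append)
qed

lemma colxT'_ls: "v \<in> ent ls \<Longrightarrow> int (colx v T') = int j - 1 - int (colx v ls)"
proof -
  assume v: "v \<in> ent ls"
  have e: "ent (rev ls) = ent ls" by (simp add: tab_entries_def)
  have "colx v T' = colx v (rev ls)" using v e by (simp add: T'_def colx_append)
  also have "\<dots> = length ls - 1 - colx v ls" using colx_rev[OF dls] v by simp
  finally show ?thesis using colx_bound[of v ls] v lls by (simp add: of_nat_diff)
qed

lemma colxT'_C: "v \<in> set (butlast C) \<Longrightarrow> colx v T' = j"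
proof -
  assume v: "v \<in> set (butlast C)"
  have "v \<notin> ent ls" using v entls butC disjACB by auto
  hence "v \<notin> ent (rev ls)" by (simp add: tab_entries_def)
  then show ?thesis using v lls by (simp add: T'_def colx_append)
qed

lemma colxT'_B: "v \<in> ent B0 \<Longrightarrow> colx v T' = j + 1 + colx v B0"
proof -
  assume v: "v \<in> ent B0"
  have "v \<notin> ent ls" using v entls disjACB disjCB yC by auto
  hence "v \<notin> ent (rev ls)" by (simp add: tab_entries_def)
  moreover have "v \<notin> set (butlast C)" using v butC disjCB by auto
  ultimately show ?thesis using v lls by (simp add: T'_def colx_append)
qed

definition gp :: "nat \<Rightarrow> int" where "gp v = (if v = x then -1 else int (colx v T'))"

lemma gp_R: "v \<in> insert y (ent A) \<Longrightarrow> gp v = int j - 1 - ia y R v"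
proof -
  assume v: "v \<in> insert y (ent A)"
  show ?thesis
  proof (cases "v = x")
    case True then show ?thesis using lenR by (simp add: gp_def ia_def x_def)
  next
    case False
    hence "v \<in> ent ls" using v entls by simp
    then show ?thesis using colxT'_ls False by (simp add: gp_def ia_def x_def ls_def)
  qed
qed

lemma colT_R: "v \<in> insert y (ent A) \<Longrightarrow> int (colx v T) = int j - 1 - ib y R v"
proof -
  assume v: "v \<in> insert y (ent A)"
  show ?thesis
  proof (cases "v = y")
    case True then show ?thesis using colxT_C yC by (simp add: ib_def)
  next
    case False then show ?thesis using v colxT_A by simp
  qed
qed

lemma ia_nonneg: "0 \<le> ia y R v" by (simp add: ia_def)
lemma ib_ge: "-1 \<le> ib y R v" by (simp add: ib_def)

lemma delG:
  assumes k: "k \<in> ent T" and sk: "Suc k \<in> ent T"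
  shows "(gp (Suc k) \<le> gp k) \<longleftrightarrow> (colx (Suc k) T \<le> colx k T)"
proof -
  let ?S = "insert y (ent A)"
  have entT2: "ent T = ?S \<union> (set C - {y}) \<union> ent B0" using entT yC by auto
  have other_gp: "\<And>v. v \<in> (set C - {y}) \<union> ent B0 \<Longrightarrow> gp v = int (colx v T) \<and> j \<le> colx v T"
  proof -
    fix v assume v: "v \<in> (set C - {y}) \<union> ent B0"
    have vx: "v \<noteq> x" using v xR disjACB disjCB yC by auto
    show "gp v = int (colx v T) \<and> j \<le> colx v T"
    proof (cases "v \<in> ent B0")
      case True then show ?thesis using colxT_B colxT'_B vx by (simp add: gp_def)
    next
      case False
      hence "v \<in> set (butlast C)" "v \<in> set C" using v butC by auto
      then show ?thesis using colxT_C colxT'_C vx by (simp add: gp_def)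
    qed
  qed
  have R_gp: "\<And>v. v \<in> ?S \<Longrightarrow> gp v \<le> int j - 1"
  proof -
    fix v assume "v \<in> ?S"
    then show "gp v \<le> int j - 1" using gp_R[of v] ia_nonneg[of v] by linarith
  qed
  have R_col: "\<And>v. v \<in> ?S \<Longrightarrow> v \<noteq> y \<Longrightarrow> int (colx v T) \<le> int j - 1"
  proof -
    fix v assume "v \<in> ?S" "v \<noteq> y"
    then show "int (colx v T) \<le> int j - 1" using colT_R[of v] by (simp add: ib_def)
  qed
  consider "k \<in> ?S \<and> Suc k \<in> ?S" | "k \<in> ?S \<and> Suc k \<notin> ?S" | "k \<notin> ?S \<and> Suc k \<in> ?S" | "k \<notin> ?S \<and> Suc k \<notin> ?S" by blast
  then show ?thesis
  proof cases
    case 1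
    have "ent R = ent A" by (rule entR)
    hence "(ia y R k \<le> ia y R (Suc k)) \<longleftrightarrow> (ib y R k \<le> ib y R (Suc k))"
      using bl_G[OF vbR distR yR] 1 by simp
    moreover have "int (colx (Suc k) T) \<le> int (colx k T) \<longleftrightarrow> colx (Suc k) T \<le> colx k T" by simp
    ultimately show ?thesis using gp_R[of k] gp_R[of "Suc k"] colT_R[of k] colT_R[of "Suc k"] 1 by linarith
  next
    case 2
    have o: "Suc k \<in> (set C - {y}) \<union> ent B0" using 2 sk entT2 by blast
    show ?thesis
    proof (cases "k = y")
      case True
      have "Suc k \<notin> set C" using ymax True by fastforce
      hence "Suc k \<in> ent B0" using o by blast
      hence "j + 1 \<le> colx (Suc k) T" using colxT_B by simp
      moreover have "colx k T = j" using True colxT_C yC by simp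
      ultimately show ?thesis using other_gp[OF o] R_gp[of k] 2 by simp
    next
      case False
      then show ?thesis using other_gp[OF o] R_gp[of k] R_col[of k] 2 by simp
    qed
  next
    case 3
    have o: "k \<in> (set C - {y}) \<union> ent B0" using 3 k entT2 by blast
    have "int (colx (Suc k) T) \<le> int j" using colT_R[of "Suc k"] 3 ib_ge[of "Suc k"] by simp
    then show ?thesis using other_gp[OF o] R_gp[of "Suc k"] 3 by simp
  next
    case 4
    have o: "k \<in> (set C - {y}) \<union> ent B0" "Suc k \<in> (set C - {y}) \<union> ent B0" using 4 k sk entT2 by blast+
    then show ?thesis using other_gp by simp
  qed
qed

end




lemma sorted_last: "sorted_wrt (<) (c::nat list) \<Longrightarrow> v \<in> set c \<Longrightarrow> v \<le> last c"
proof -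
  assume s: "sorted_wrt (<) c" and v: "v \<in> set c"
  then obtain p where p: "p < length c" "c!p = v" by (auto simp: in_set_conv_nth)
  have ne: "c \<noteq> []" using v by auto
  have l: "last c = c ! (length c - 1)" using ne by (simp add: last_conv_nth)
  show ?thesis
  proof (cases "p = length c - 1")
    case True then show ?thesis using l p by simp
  next
    case False
    hence "p < length c - 1" using p by simp
    hence "c!p < c!(length c - 1)" using s by (simp add: sorted_wrt_iff_nth_less)
    then show ?thesis using l p by simp
  qed
qed

lemma bl_snoc_fst:
  assumes "vb y (X @ [c])"
  shows "fst (bump_left y (X @ [c])) \<in> set c"
proof -
  let ?u = "fst (bump_left y X)"
  have v: "vb ?u [c]" using vb_append[OF assms] by simp
  hence ex: "\<exists>v\<in>set c. v < ?u" by simp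
  have "fst (bump_left y (X @ [c])) = fst (bump_left ?u [c])" using bl_append[of y X "[c]"] by simp
  also have "\<dots> = Max {v \<in> set c. v < ?u}" by (simp add: Let_def)
  finally show ?thesis using Max_lt(1)[OF ex] by simp
qed

theorem L3:
  assumes w: "wft T" and c1: "corner T i j"
    and c2: "corner (snd (col_del T (i, j))) i' j'"
  shows "fst (col_del (snd (col_del T (i, j))) (i', j')) < fst (col_del T (i, j)) \<longleftrightarrow> i' < i"
proof -
  interpret a: cdel T i j using w c1 by unfold_locales
  have cdT: "col_del T (i, j) = (a.x, a.T')" by (rule a.CD)
  interpret b: cdel a.T' i' j' using a.wfT' c2 cdT by unfold_locales simp_all
  have cdT': "col_del a.T' (i', j') = (b.x, b.T')" by (rule b.CD)
  have jl': "j' < length T" using b.jl a.lenT' by simp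
  have lenb: "length (a.T' ! j') = Suc i'" using b.lenC by (simp add: b.C_def)
  have goal: "b.x < a.x \<longleftrightarrow> i' < i"
  proof (cases "j' < j")
    case True
    have "length (T!j) \<le> length (T!j')" using wf_len_mono[OF w] True a.jl by simp
    hence ii: "i \<le> i'" using lenb a.lencols[OF jl'] True a.lenC by (simp add: a.C_def)
    define m where "m = j - 1 - j'"
    have mj: "m < j" "Suc m + j' = j" using True by (auto simp: m_def)
    define R1 where "R1 = take m a.R"
    define R2 where "R2 = drop (Suc m) a.R"
    define c where "c = a.R ! m"
    have Rdec: "a.R = R1 @ c # R2" unfolding R1_def R2_def c_def using mj a.lenR by (simp add: id_take_nth_drop)
    have vb1: "vb a.y R1" and vb2: "vb (fst (bump_left a.y R1)) (c # R2)"
      using vb_append[of a.y R1 "c # R2"] a.vbR Rdec by auto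
    define wv where "wv = fst (bump_left a.y R1)"
    define z where "z = Max {v \<in> set c. v < wv}"
    have ex: "\<exists>v\<in>set c. v < wv" using vb2 wv_def by simp
    have zc: "z \<in> set c" "z < wv" using Max_lt[OF ex] z_def by auto
    have vbz: "vb z R2" using vb2 wv_def z_def by simp
    have blR: "bump_left a.y a.R = (fst (bump_left z R2), snd (bump_left a.y R1) @ repl z wv c # snd (bump_left z R2))"
      using bl_append[of a.y R1 "c # R2"] bl_Cons[of wv c R2] Rdec wv_def z_def by simp
    have xx: "a.x = fst (bump_left z R2)" using blR by (simp add: a.x_def)
    have lsx: "a.ls = snd (bump_left a.y R1) @ repl z wv c # snd (bump_left z R2)" using blR by (simp add: a.ls_def)
    have "length (snd (bump_left a.y R1)) = length R1" using bl_lengths[of a.y R1] by (metis length_map)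
    hence lR1: "length (snd (bump_left a.y R1)) = m" using mj a.lenR by (simp add: R1_def)
    have lls: "length a.ls = j" by (rule a.lls)
    have Cb: "b.C = repl z wv c"
    proof -
      have "b.C = a.T' ! j'" by (simp add: b.C_def)
      also have "\<dots> = rev a.ls ! j'" using a.T'_nth_lt True by simp
      also have "\<dots> = a.ls ! m" using lls True mj by (simp add: rev_nth m_def)
      also have "\<dots> = repl z wv c" using lsx lR1 by (simp add: nth_append)
      finally show ?thesis .
    qed
    have Rb: "b.R = snd (bump_left z R2)"
    proof -
      have "take j' a.T' = take j' (rev a.ls)" using lls True by (simp add: a.T'_def)
      hence e1: "b.R = rev (take j' (rev a.ls))" by (simp add: b.R_def b.A_def)
      have e2: "rev (take j' (rev a.ls)) = drop (length a.ls - j') a.ls" by (simp add: take_rev)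
      have "length a.ls - j' = Suc m" using lls mj by linarith
      hence e3: "drop (length a.ls - j') a.ls = drop (Suc m) a.ls" by simp
      have e4: "drop (Suc m) a.ls = snd (bump_left z R2)" using lsx lR1 by simp
      show ?thesis using e1 e2 e3 e4 by simp
    qed
    have wy: "wv \<le> b.y"
    proof -
      have "wv \<in> set (repl z wv c)" using set_repl[OF zc(1)] by simp
      moreover have "sorted_wrt (<) b.C" by (rule b.sC)
      ultimately show ?thesis using sorted_last Cb by (simp add: b.y_def)
    qed
    have dR: "distinct (concat a.R)" by (rule a.distR)
    hence dR2: "distinct (concat R2)" and zR2: "z \<notin> ent R2" using Rdec zc by (auto simp: tab_entries_def)
    have v2: "vb b.y (snd (bump_left z R2))" using b.vbR Rb by simp
    have zb: "z < b.y" using zc wy by simp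
    have "fst (bump_left z R2) < fst (bump_left b.y (snd (bump_left z R2)))"
      using lemmaB[OF vbz v2 zb zR2 dR2] .
    hence "a.x < b.x" unfolding xx b.x_def Rb .
    then show ?thesis using ii by simp
  next
    case False
    show ?thesis
    proof (cases "j' = j")
      case True
      have Cb: "b.C = butlast a.C" unfolding b.C_def using a.T'_nth_j True by simp
      have ii: "i' < i" using lenb a.lencols[OF jl'] True by simp
      have Rb: "b.R = a.ls"
      proof -
        have "take j' a.T' = rev a.ls" using a.lls True by (simp add: a.T'_def)
        then show ?thesis by (simp add: b.R_def b.A_def)
      qed
      have "b.y \<in> set (butlast a.C)" using b.yC Cb by simp
      hence "b.y \<in> set a.C" "b.y \<noteq> a.y" using a.butC by auto
      hence "b.y < a.y" using a.ymax[of b.y] by simp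
      moreover have "vb b.y (snd (bump_left a.y a.R))" using b.vbR Rb by (simp add: a.ls_def)
      ultimately have "fst (bump_left b.y (snd (bump_left a.y a.R))) < fst (bump_left a.y a.R)"
        using lemmaA[OF a.vbR _ _ a.yR a.distR] by blast
      hence "b.x < a.x" unfolding b.x_def a.x_def Rb a.ls_def .
      then show ?thesis using ii by simp
    next
      case False
      hence jj: "j < j'" using \<open>\<not> j' < j\<close> by simp
      have "length (a.T'!j') = length (T!j')" using a.lencols[OF jl'] jj by simp
      moreover have "Suc j < length T" using jj jl' by simp
      hence "length (T!j') \<le> length (T!Suc j)" using wf_len_mono[OF w] jj jl' by simp
      moreover have "length (T!Suc j) \<le> i" using c1 \<open>Suc j < length T\<close> by (simp add: corner_def)
      ultimately have ii: "i' < i" using lenb by simp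
      define P where "P = take (j' - j - 1) a.B0"
      have tk: "take j' a.T' = rev a.ls @ butlast a.C # P"
      proof -
        have "take j' a.T' = rev a.ls @ take (j' - j) (butlast a.C # a.B0)" using a.lls jj by (simp add: a.T'_def)
        moreover have "j' - j = Suc (j' - j - 1)" using jj by simp
        hence "take (j' - j) (butlast a.C # a.B0) = butlast a.C # P" unfolding P_def by (metis take_Suc_Cons)
        ultimately show ?thesis by simp
      qed
      have Rb: "b.R = (rev P @ [butlast a.C]) @ a.ls" using tk by (simp add: b.R_def b.A_def)
      define z where "z = fst (bump_left b.y (rev P @ [butlast a.C]))"
      have vbb: "vb b.y ((rev P @ [butlast a.C]) @ a.ls)" using b.vbR Rb by simp
      have zin: "z \<in> set (butlast a.C)" using bl_snoc_fst vb_append[OF vbb] z_def by simp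
      have "z \<in> set a.C" "z \<noteq> a.y" using zin a.butC by auto
      hence zy: "z < a.y" using a.ymax[of z] by simp
      have vbz: "vb z a.ls" using vb_append[OF vbb] z_def by simp
      have bx: "b.x = fst (bump_left z a.ls)" using bl_append[of b.y "rev P @ [butlast a.C]" a.ls] Rb z_def by (simp add: b.x_def)
      have "b.x < a.x" unfolding bx a.x_def a.ls_def
        by (rule lemmaA[OF a.vbR _ zy a.yR a.distR]) (use vbz in \<open>simp add: a.ls_def\<close>)
      then show ?thesis using ii by simp
    qed
  qed
  then show ?thesis using cdT cdT' by simp
qed




definition shape :: "nat list list \<Rightarrow> (nat \<times> nat) set" where
  "shape T = {(i, c). c < length T \<and> i < length (T!c)}"

definition addable :: "nat list list \<Rightarrow> nat \<Rightarrow> nat \<Rightarrow> bool" where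
  "addable T i j \<longleftrightarrow> (i, j) \<notin> shape T \<and> (0 < i \<longrightarrow> (i - 1, j) \<in> shape T) \<and> (0 < j \<longrightarrow> (i, j - 1) \<in> shape T)"

lemma shape_col_del:
  assumes "wft T" "corner T i j"
  shows "shape (snd (col_del T (i, j))) = shape T - {(i, j)}"
proof -
  interpret a: cdel T i j using assms by unfold_locales
  have "snd (col_del T (i, j)) = a.T'" using a.CD by simp
  moreover have "shape a.T' = shape T - {(i, j)}"
  proof -
    have lj: "length (T!j) = Suc i" using a.lenC by (simp add: a.C_def)
    show ?thesis unfolding shape_def using a.lenT' a.lencols lj a.jl
      by (auto split: if_splits)
  qed
  ultimately show ?thesis by simp
qed

lemma corner_of_shape:
  assumes "(i, j) \<in> shape T" "(Suc i, j) \<notin> shape T" "(i, Suc j) \<notin> shape T"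
  shows "corner T i j"
  using assms unfolding shape_def corner_def by auto

lemma ent_nth: "ent T = (\<Union>c<length T. set (T!c))"
proof -
  have "set T = (\<lambda>c. T!c) ` {..<length T}" by (auto simp: set_conv_nth)
  then show ?thesis by (simp add: tab_entries_def)
qed

lemma domc_add:
  assumes d: "domc a b" and ak: "\<forall>v\<in>set a. v < k" and bk: "\<forall>v\<in>set b. v < k"
    and da: "distinct a" and db: "distinct b" and lb: "length b < length a"
  shows "domc a (b @ [k])"
  unfolding domc_def
proof
  fix t
  have kb: "k \<notin> set b" using bk by auto
  have e: "cle (set (b @ [k])) t = cle (set b) t + (if k \<le> t then 1 else 0)"
    using cle_ins[of "set b" k t] kb by simp
  show "cle (set (b @ [k])) t \<le> cnt (set a) t"
  proof (cases "k \<le> t")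
    case True
    have "cnt (set a) t = card (set a)" using ak True by (intro cnt_all) auto
    moreover have "cle (set b) t \<le> card (set b)" by (rule cle_card) simp
    ultimately show ?thesis using e True lb da db by (simp add: distinct_card)
  next
    case False
    then show ?thesis using e d unfolding domc_def by simp
  qed
qed

lemma domc_mono_left:
  assumes "domc a b" "k \<notin> set a"
  shows "domc (a @ [k]) b"
  unfolding domc_def
proof
  fix t
  have "cnt (set a) t \<le> cnt (set (a @ [k])) t" using cnt_ins[of "set a" k t] assms(2) by simp
  then show "cle (set b) t \<le> cnt (set (a @ [k])) t" using assms(1) unfolding domc_def by (meson le_trans)
qed

lemma place_struct:
  assumes w: "wft T" and ad: "addable T i j"
  shows "(j < length T \<and> i = length (T!j) \<and> place T (i, j) k = T[j := T!j @ [k]]) \<or>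
         (j = length T \<and> i = 0 \<and> place T (i, j) k = T @ [[k]])"
proof -
  have nin: "(i, j) \<notin> shape T" using ad by (simp add: addable_def)
  show ?thesis
  proof (cases "j < length T")
    case True
    have "length (T!j) \<le> i" using nin True by (simp add: shape_def)
    moreover have "i \<le> length (T!j)"
    proof (cases i)
      case (Suc i') then have "(i', j) \<in> shape T" using ad by (simp add: addable_def)
      then show ?thesis using Suc by (simp add: shape_def)
    qed simp
    ultimately have ii: "i = length (T!j)" by simp
    have "place T (i, j) k = T[j := T!j @ [k]]" using True ii by (simp add: place_def Let_def)
    then show ?thesis using True ii by simp
  next
    case False
    have jle: "j \<le> length T"
    proof (cases j)
      case (Suc j')
      then have "(i, j') \<in> shape T" using ad by (simp add: addable_def)
      then show ?thesis using Suc by (simp add: shape_def)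
    qed simp
    hence jj: "j = length T" using False by simp
    have i0: "i = 0"
    proof (rule ccontr)
      assume "i \<noteq> 0"
      then have "(i - 1, j) \<in> shape T" using ad by (simp add: addable_def)
      then show False using jj by (simp add: shape_def)
    qed
    have "place T (i, j) k = T @ [[k]]" using jj i0 by (simp add: place_def Let_def)
    then show ?thesis using jj i0 by simp
  qed
qed

lemma cnt_all_lt: "\<forall>v\<in>S. v < t \<Longrightarrow> finite S \<Longrightarrow> cnt S t = card S" using cnt_all by blast

lemma place_facts:
  assumes w: "wft T" and ad: "addable T i j" and big: "\<forall>v\<in>ent T. v < k"
  defines "T2 \<equiv> place T (i, j) k"
  shows "wft T2 \<and> ent T2 = insert k (ent T) \<and> shape T2 = insert (i, j) (shape T) \<and>
    colx k T2 = j \<and> rowx T2 k = i \<and>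
    (\<forall>v\<in>ent T. colx v T2 = colx v T \<and> rowx T2 v = rowx T v)"
proof -
  have kT: "k \<notin> ent T" using big by auto
  have dT: "distinct (concat T)" using w wf_distinct by blast
  obtain c0 where colj: "j < length T2" "T2 ! j = c0 @ [k]" "set c0 = (if j < length T then set (T!j) else {})"
    "length c0 = i"
    and other: "\<And>c. c < length T2 \<Longrightarrow> c \<noteq> j \<Longrightarrow> c < length T \<and> T2 ! c = T ! c"
    and lenT2: "length T2 = max (length T) (Suc j)"
    and old: "j < length T \<longrightarrow> c0 = T ! j"
  proof -
    consider "j < length T \<and> i = length (T!j) \<and> T2 = T[j := T!j @ [k]]" | "j = length T \<and> i = 0 \<and> T2 = T @ [[k]]"
      using place_struct[OF w ad, of k] T2_def by blast
    then show ?thesis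
    proof cases
      case 1
      show ?thesis by (rule that[of "T!j"]) (use 1 in \<open>auto simp: nth_list_update\<close>)
    next
      case 2
      show ?thesis by (rule that[of "[]"]) (use 2 in \<open>auto simp: nth_append\<close>)
    qed
  qed
  have entT2: "ent T2 = insert k (ent T)"
  proof -
    have "ent T2 = (\<Union>c<length T2. set (T2!c))" by (rule ent_nth)
    also have "\<dots> = insert k (\<Union>c<length T. set (T!c))"
    proof
      show "(\<Union>c<length T2. set (T2!c)) \<subseteq> insert k (\<Union>c<length T. set (T!c))"
      proof
        fix v assume "v \<in> (\<Union>c<length T2. set (T2!c))"
        then obtain c where c: "c < length T2" "v \<in> set (T2!c)" by blast
        show "v \<in> insert k (\<Union>c<length T. set (T!c))"
        proof (cases "c = j")
          case True then show ?thesis using c colj by (auto split: if_splits)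
        next
          case False then show ?thesis using c other by fastforce
        qed
      qed
    next
      show "insert k (\<Union>c<length T. set (T!c)) \<subseteq> (\<Union>c<length T2. set (T2!c))"
      proof
        fix v assume v: "v \<in> insert k (\<Union>c<length T. set (T!c))"
        show "v \<in> (\<Union>c<length T2. set (T2!c))"
        proof (cases "v = k")
          case True then show ?thesis using colj by force
        next
          case False
          then obtain c where c: "c < length T" "v \<in> set (T!c)" using v by blast
          have cl: "c < length T2" using c lenT2 by simp
          show ?thesis
          proof (cases "c = j")
            case True then show ?thesis using c colj old cl by (metis (no_types, lifting) UN_iff Un_iff lessThan_iff set_append)
          next
            case False then show ?thesis using c other cl by fastforce
          qed
        qed
      qed
    qed
    also have "(\<Union>c<length T. set (T!c)) = ent T" by (rule ent_nth[symmetric])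
    finally show ?thesis .
  qed
  have shape2: "shape T2 = insert (i, j) (shape T)"
  proof -
    have "\<And>a c. (a, c) \<in> shape T2 \<longleftrightarrow> (a, c) = (i, j) \<or> (a, c) \<in> shape T"
    proof -
      fix a c
      show "(a, c) \<in> shape T2 \<longleftrightarrow> (a, c) = (i, j) \<or> (a, c) \<in> shape T"
      proof (cases "c = j")
        case True
        have "length (T2!j) = Suc i" using colj by simp
        moreover have "j < length T \<Longrightarrow> length (T!j) = i" using colj old by simp
        moreover have "\<not> j < length T \<Longrightarrow> i = 0" using colj by simp
        ultimately show ?thesis using True colj by (cases "j < length T") (auto simp: shape_def)
      next
        case False
        have "c < length T2 \<longleftrightarrow> c < length T" using lenT2 False other[of c] by auto
        then show ?thesis using other False by (auto simp: shape_def)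
      qed
    qed
    then show ?thesis by auto
  qed
  have wf2: "wft T2"
  proof -
    consider "j < length T \<and> i = length (T!j) \<and> T2 = T[j := T!j @ [k]]" | "j = length T \<and> i = 0 \<and> T2 = T @ [[k]]"
      using place_struct[OF w ad, of k] T2_def by blast
    then show ?thesis
    proof cases
      case 1
      define X where "X = take j T"
      define Y where "Y = drop (Suc j) T"
      have Td: "T = X @ T!j # Y" using 1 unfolding X_def Y_def by (simp add: id_take_nth_drop)
      have T2d: "T2 = X @ (T!j @ [k]) # Y" using 1 unfolding X_def Y_def by (simp add: upd_conv_take_nth_drop)
      have wT: "wft (X @ T!j # Y)" using w Td by simp
      have wX: "wft X" and wjY: "wft (T!j # Y)" and dXj: "ent X \<inter> ent (T!j # Y) = {}"
        and dmX: "X \<noteq> [] \<longrightarrow> domc (last X) (T!j)" using wf_append[of X "T!j # Y"] wT by auto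
      have sj: "sorted_wrt (<) (T!j)" and wY: "wft Y" and djY: "set (T!j) \<inter> ent Y = {}"
        and dmY: "Y \<noteq> [] \<longrightarrow> domc (T!j) (hd Y)" using wjY wf_Cons by auto
      have kj: "\<forall>v\<in>set (T!j). v < k" using big 1 by (auto simp: tab_entries_def)
      have sj2: "sorted_wrt (<) (T!j @ [k])" using sj kj by (simp add: sorted_wrt_append)
      have eT: "ent (X @ T!j # Y) = ent T" by (simp only: Td[symmetric])
      have kY: "k \<notin> ent Y" using kT eT by auto
      have kX: "k \<notin> ent X" using kT eT by auto
      have w2: "wft ((T!j @ [k]) # Y)"
      proof -
        have "Y \<noteq> [] \<longrightarrow> domc (T!j @ [k]) (hd Y)" using dmY domc_mono_left kj by blast
        then show ?thesis using wf_Cons sj2 wY djY kY by auto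
      qed
      have dm2: "X \<noteq> [] \<longrightarrow> domc (last X) (T!j @ [k])"
      proof
        assume Xn: "X \<noteq> []"
        hence j0: "0 < j" using X_def by (cases j) auto
        have lX: "last X = T!(j-1)" using Xn j0 1 X_def by (simp add: last_conv_nth)
        have "(i, j-1) \<in> shape T" using ad j0 by (simp add: addable_def)
        hence lt: "length (T!j) < length (T!(j-1))" using 1 by (simp add: shape_def)
        have jm1: "j - 1 < length T" using 1 by linarith
        have ak: "\<forall>v\<in>set (T!(j-1)). v < k" using big jm1 by (auto simp: tab_entries_def)
        have da: "distinct (T!(j-1))" using w jm1 wf_sorted strict_sorted_iff nth_mem by metis
        have db: "distinct (T!j)" using sj strict_sorted_iff by blast
        show "domc (last X) (T!j @ [k])" unfolding lX
          by (rule domc_add[OF _ ak kj da db lt]) (use dmX Xn lX in simp)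
      qed
      have "ent X \<inter> ent ((T!j @ [k]) # Y) = {}" using dXj kX by auto
      then show ?thesis using T2d wf_append[of X "(T!j @ [k]) # Y"] wX w2 dm2 by simp
    next
      case 2
      have w1: "wft [[k]]" by (simp add: wf_Cons)
      have dm: "T \<noteq> [] \<longrightarrow> domc (last T) [k]"
      proof
        assume Tn: "T \<noteq> []"
        hence j0: "0 < j" using 2 by simp
        have "(0, j-1) \<in> shape T" using ad j0 2 by (simp add: addable_def)
        hence ne: "0 < length (last T)" using 2 Tn by (simp add: shape_def last_conv_nth)
        have ak: "\<forall>v\<in>set (last T). v < k" using big Tn by (auto simp: tab_entries_def)
        have da: "distinct (last T)" using w Tn wf_sorted strict_sorted_iff last_in_set by metis
        have "domc (last T) ([] @ [k])"
          by (rule domc_add[OF _ ak _ da]) (use ne in \<open>auto simp: domc_def cle_def\<close>)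
        then show "domc (last T) [k]" by simp
      qed
      then show ?thesis using 2 wf_append[of T "[[k]]"] w w1 kT by auto
    qed
  qed
  have d2: "distinct (concat T2)" using wf2 wf_distinct by blast
  have colk: "colx k T2 = j" using colx_nth[OF d2 colj(1)] colj by simp
  have s0: "sorted_wrt (<) c0"
  proof (cases "j < length T")
    case True then show ?thesis using old w wf_sorted by auto
  next
    case False then show ?thesis using colj by simp
  qed
  have c0k: "\<forall>v\<in>set c0. v < k" using colj big by (auto simp: tab_entries_def split: if_splits)
  have "rowx T2 k = cnt (set (c0 @ [k])) k" using colk colj by (simp add: rowx_def)
  also have "\<dots> = card (set c0)"
  proof -
    have "{v \<in> set (c0 @ [k]). v < k} = set c0" using c0k by auto
    then show ?thesis by (simp add: cnt_def)
  qed
  also have "\<dots> = i" using s0 colj strict_sorted_iff distinct_card by metis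
  finally have rowk: "rowx T2 k = i" .
  have oldv: "\<forall>v\<in>ent T. colx v T2 = colx v T \<and> rowx T2 v = rowx T v"
  proof
    fix v assume v: "v \<in> ent T"
    define c where "c = colx v T"
    have cb: "c < length T" "v \<in> set (T!c)" using colx_bound[OF v] c_def by auto
    have cl: "c < length T2" using cb lenT2 by simp
    have vk: "v < k" using big v by simp
    show "colx v T2 = colx v T \<and> rowx T2 v = rowx T v"
    proof (cases "c = j")
      case True
      have "T2 ! c = T ! c @ [k]" using True colj old cb by simp
      moreover have "colx v T2 = c" using colx_nth[OF d2 cl] cb \<open>T2 ! c = T ! c @ [k]\<close> by simp
      moreover have "cnt (set (T!c @ [k])) v = cnt (set (T!c)) v"
        using cnt_ins[of "set (T!c)" k v] vk kT cb by (auto simp: tab_entries_def)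
      ultimately show ?thesis using c_def by (simp add: rowx_def)
    next
      case False
      have "T2 ! c = T ! c" using other cl False by simp
      moreover have "colx v T2 = c" using colx_nth[OF d2 cl] cb \<open>T2 ! c = T ! c\<close> by simp
      ultimately show ?thesis using c_def by (simp add: rowx_def)
    qed
  qed
  show ?thesis using wf2 entT2 shape2 colk rowk oldv by simp
qed




section \<open>Oscillating tableaux\<close>

definition dclosed :: "(nat \<times> nat) set \<Rightarrow> bool" where
  "dclosed S \<longleftrightarrow> (\<forall>i j i' j'. (i, j) \<in> S \<longrightarrow> i' \<le> i \<longrightarrow> j' \<le> j \<longrightarrow> (i', j') \<in> S)"

lemma dclosed_diagram: "is_partition mu \<Longrightarrow> dclosed (diagram mu)"
  unfolding dclosed_def
proof (intro allI impI)
  fix i j i' j' assume p: "is_partition mu" and ij: "(i, j) \<in> diagram mu" and le: "i' \<le> i" "j' \<le> j"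
  have s: "sorted_wrt (\<ge>) mu" using p by (simp add: is_partition_def)
  have i: "i < length mu" "j < mu ! i" using ij by (auto simp: diagram_def)
  have "mu ! i \<le> mu ! i'"
  proof (cases "i' = i")
    case False
    hence "i' < i" using le by simp
    then show ?thesis using s i(1) by (simp add: sorted_wrt_iff_nth_less)
  qed simp
  then show "(i', j') \<in> diagram mu" using i le by (simp add: diagram_def)
qed

lemma symdiff_single:
  assumes "card (symdiff X Y) = 1"
  shows "(\<exists>b. b \<notin> X \<and> Y = insert b X \<and> X \<subset> Y \<and> the_elem (symdiff X Y) = b) \<or>
         (\<exists>b. b \<in> X \<and> Y = X - {b} \<and> \<not> X \<subset> Y \<and> the_elem (symdiff X Y) = b)"
proof -
  obtain b where b: "symdiff X Y = {b}" using assms card_1_singletonE by metis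
  have te: "the_elem (symdiff X Y) = b" using b by simp
  have u: "\<And>v. (v \<in> X \<and> v \<notin> Y) \<or> (v \<in> Y \<and> v \<notin> X) \<longleftrightarrow> v = b"
  proof -
    fix v
    have "v \<in> symdiff X Y \<longleftrightarrow> v = b" using b by simp
    then show "(v \<in> X \<and> v \<notin> Y) \<or> (v \<in> Y \<and> v \<notin> X) \<longleftrightarrow> v = b" by (simp add: symdiff_def)
  qed
  show ?thesis
  proof (cases "b \<in> Y")
    case True
    have bX: "b \<notin> X" using u[of b] True by simp
    have "\<And>v. v \<in> Y \<longleftrightarrow> v = b \<or> v \<in> X" using u True bX by metis
    hence "Y = insert b X" by auto
    moreover have "X \<subset> Y" using \<open>Y = insert b X\<close> bX by auto
    ultimately show ?thesis using te bX by auto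
  next
    case False
    have bX: "b \<in> X" using u[of b] False by simp
    have "\<And>v. v \<in> Y \<longleftrightarrow> v \<noteq> b \<and> v \<in> X" using u False bX by metis
    hence "Y = X - {b}" by auto
    moreover have "\<not> X \<subset> Y" using \<open>Y = X - {b}\<close> bX by auto
    ultimately show ?thesis using te bX by auto
  qed
qed

locale osc =
  fixes r :: nat and mus :: "nat list list"
  assumes ot: "osc_tableau r mus"
begin

abbreviation "D k \<equiv> diagram (mus ! k)"

lemma lenmus: "length mus = Suc r" using ot by (simp add: osc_tableau_def)

lemma dcD: "k \<le> r \<Longrightarrow> dclosed (D k)"
  using ot lenmus by (intro dclosed_diagram) (auto simp: osc_tableau_def)

lemma D0: "D 0 = {}" using ot by (simp add: osc_tableau_def diagram_def)

lemma step_exp: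
  assumes "Suc k \<le> r" "is_exp mus (Suc k)"
  shows "step_box mus (Suc k) \<notin> D k \<and> D (Suc k) = insert (step_box mus (Suc k)) (D k)"
proof -
  have "card (symdiff (D k) (D (Suc k))) = 1" using ot assms(1) by (simp add: osc_tableau_def)
  hence sd: "(\<exists>b. b \<notin> D k \<and> D (Suc k) = insert b (D k) \<and> D k \<subset> D (Suc k) \<and> the_elem (symdiff (D k) (D (Suc k))) = b) \<or>
         (\<exists>b. b \<in> D k \<and> D (Suc k) = D k - {b} \<and> \<not> D k \<subset> D (Suc k) \<and> the_elem (symdiff (D k) (D (Suc k))) = b)"
    by (rule symdiff_single)
  have ex: "D k \<subset> D (Suc k)" using assms(2) by (simp add: is_exp_def)
  have sbx: "step_box mus (Suc k) = the_elem (symdiff (D k) (D (Suc k)))" by (simp add: step_box_def)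
  from sd ex obtain b where h: "b \<notin> D k" "D (Suc k) = insert b (D k)" "the_elem (symdiff (D k) (D (Suc k))) = b" by blast
  have "step_box mus (Suc k) = b" using trans[OF sbx h(3)] .
  then show ?thesis using h(1,2) by simp
qed

lemma step_con:
  assumes "Suc k \<le> r" "\<not> is_exp mus (Suc k)"
  shows "step_box mus (Suc k) \<in> D k \<and> D (Suc k) = D k - {step_box mus (Suc k)}"
proof -
  have "card (symdiff (D k) (D (Suc k))) = 1" using ot assms(1) by (simp add: osc_tableau_def)
  hence sd: "(\<exists>b. b \<notin> D k \<and> D (Suc k) = insert b (D k) \<and> D k \<subset> D (Suc k) \<and> the_elem (symdiff (D k) (D (Suc k))) = b) \<or>
         (\<exists>b. b \<in> D k \<and> D (Suc k) = D k - {b} \<and> \<not> D k \<subset> D (Suc k) \<and> the_elem (symdiff (D k) (D (Suc k))) = b)"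
    by (rule symdiff_single)
  have ex: "\<not> D k \<subset> D (Suc k)" using assms(2) by (simp add: is_exp_def)
  have sbx: "step_box mus (Suc k) = the_elem (symdiff (D k) (D (Suc k)))" by (simp add: step_box_def)
  from sd ex obtain b where h: "b \<in> D k" "D (Suc k) = D k - {b}" "the_elem (symdiff (D k) (D (Suc k))) = b" by blast
  have "step_box mus (Suc k) = b" using trans[OF sbx h(3)] .
  then show ?thesis using h(1,2) by simp
qed

definition st :: "nat \<Rightarrow> (nat \<times> nat) set \<times> nat list list" where
  "st k = foldl (sundaram_step mus) ({}, []) [1..<Suc k]"

lemma st_0: "st 0 = ({}, [])" by (simp add: st_def)
lemma st_Suc: "st (Suc k) = sundaram_step mus (st k) (Suc k)" by (simp add: st_def)
lemma part1: "sundaram_part1 mus = st r" using lenmus by (simp add: st_def sundaram_part1_def)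

abbreviation "Pk k \<equiv> fst (st k)"
abbreviation "Tk k \<equiv> snd (st k)"

lemma st_exp: "is_exp mus (Suc k) \<Longrightarrow> st (Suc k) = (Pk k, place (Tk k) (step_box mus (Suc k)) (Suc k))"
  by (simp add: st_Suc sundaram_step_def split: prod.splits)

lemma st_con: "\<not> is_exp mus (Suc k) \<Longrightarrow>
  st (Suc k) = (insert (fst (col_del (Tk k) (step_box mus (Suc k))), Suc k) (Pk k), snd (col_del (Tk k) (step_box mus (Suc k))))"
  by (simp add: st_Suc sundaram_step_def split: prod.splits)

definition matching :: "(nat \<times> nat) set \<Rightarrow> bool" where
  "matching P \<longleftrightarrow> (\<forall>p\<in>P. fst p \<noteq> snd p) \<and>
     (\<forall>p\<in>P. \<forall>q\<in>P. (fst p = fst q \<or> fst p = snd q \<or> snd p = fst q \<or> snd p = snd q) \<longrightarrow> p = q)"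

definition invk :: "nat \<Rightarrow> bool" where
  "invk k \<longleftrightarrow> wft (Tk k) \<and> shape (Tk k) = D k \<and> ent (Tk k) \<inter> inv_support (Pk k) = {} \<and>
     ent (Tk k) \<union> inv_support (Pk k) = {1..k} \<and>
     (\<forall>(a, b)\<in>Pk k. a < b \<and> b \<le> k \<and> \<not> is_exp mus b \<and> is_exp mus a) \<and>
     matching (Pk k) \<and> (\<forall>v\<in>ent (Tk k). is_exp mus v)"

lemma shape_Nil: "shape [] = {}" by (simp add: shape_def)

lemma inv_0: "invk 0"
  by (simp add: invk_def st_0 shape_Nil D0 inv_support_def matching_def)

lemma inv_Suc:
  assumes "invk k" "Suc k \<le> r"
  shows "invk (Suc k)"
proof -
  obtain P T where PT: "st k = (P, T)" by (metis surj_pair)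
  have I: "wft T" "shape T = D k" "ent T \<inter> inv_support P = {}" "ent T \<union> inv_support P = {1..k}"
     "\<forall>(a, b)\<in>P. a < b \<and> b \<le> k \<and> \<not> is_exp mus b \<and> is_exp mus a" "matching P"
     "\<forall>v\<in>ent T. is_exp mus v" using assms(1) PT by (auto simp: invk_def)
  obtain i j where b: "step_box mus (Suc k) = (i, j)" by (metis surj_pair)
  have dck: "dclosed (D k)" "dclosed (D (Suc k))" using dcD assms(2) by auto
  have entk: "\<forall>v\<in>ent T. 1 \<le> v \<and> v \<le> k" using I(4) by auto
  have suppk: "\<forall>v\<in>inv_support P. 1 \<le> v \<and> v \<le> k" using I(4) by auto
  show ?thesis
  proof (cases "is_exp mus (Suc k)")
    case True
    have sb: "(i, j) \<notin> D k" "D (Suc k) = insert (i, j) (D k)" using step_exp[OF assms(2) True] b by auto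
    have ad: "addable T i j" unfolding addable_def
    proof (intro conjI impI)
      show "(i, j) \<notin> shape T" using sb I(2) by simp
    next
      assume "0 < i"
      have ij: "(i, j) \<in> D (Suc k)" using sb by simp
      have "(i - 1, j) \<in> D (Suc k)" using dck(2) ij unfolding dclosed_def by (meson diff_le_self order_refl)
      then show "(i - 1, j) \<in> shape T" using sb I(2) \<open>0 < i\<close> by auto
    next
      assume "0 < j"
      have ij: "(i, j) \<in> D (Suc k)" using sb by simp
      have "(i, j - 1) \<in> D (Suc k)" using dck(2) ij unfolding dclosed_def by (meson diff_le_self order_refl)
      then show "(i, j - 1) \<in> shape T" using sb I(2) \<open>0 < j\<close> by auto
    qed
    have big: "\<forall>v\<in>ent T. v < Suc k" using entk by auto
    have pf: "wft (place T (i, j) (Suc k)) \<and> ent (place T (i, j) (Suc k)) = insert (Suc k) (ent T) \<and>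
      shape (place T (i, j) (Suc k)) = insert (i, j) (shape T)"
      using place_facts[OF I(1) ad big] by simp
    have stS: "st (Suc k) = (P, place T (i, j) (Suc k))" using st_exp[OF True] PT b by simp
    have ks: "Suc k \<notin> inv_support P" using suppk by auto
    let ?T2 = "place T (i, j) (Suc k)"
    have c1: "wft ?T2" using pf by simp
    have c2: "shape ?T2 = D (Suc k)" using pf sb I(2) by simp
    have c3: "ent ?T2 \<inter> inv_support P = {}" using pf I(3) ks by auto
    have c4: "ent ?T2 \<union> inv_support P = {1..Suc k}"
    proof -
      have "ent ?T2 \<union> inv_support P = insert (Suc k) (ent T \<union> inv_support P)" using pf by auto
      then show ?thesis using I(4) by (simp add: atLeastAtMostSuc_conv)
    qed
    have c5: "\<forall>(a, b)\<in>P. a < b \<and> b \<le> Suc k \<and> \<not> is_exp mus b \<and> is_exp mus a" using I(5) by fastforce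
    have c7: "\<forall>v\<in>ent ?T2. is_exp mus v" using pf I(7) True by auto
    show ?thesis unfolding invk_def stS fst_conv snd_conv using c1 c2 c3 c4 c5 I(6) c7 by blast
  next
    case False
    have sb: "(i, j) \<in> D k" "D (Suc k) = D k - {(i, j)}" using step_con[OF assms(2) False] b by auto
    have cor: "corner T i j"
    proof (rule corner_of_shape)
      show "(i, j) \<in> shape T" using sb I(2) by simp
    next
      show "(Suc i, j) \<notin> shape T"
      proof
        assume "(Suc i, j) \<in> shape T"
        hence "(Suc i, j) \<in> D (Suc k)" using sb I(2) by auto
        hence "(i, j) \<in> D (Suc k)" using dck(2) unfolding dclosed_def by (meson le_refl lessI less_imp_le)
        then show False using sb by simp
      qed
    next
      show "(i, Suc j) \<notin> shape T"
      proof
        assume "(i, Suc j) \<in> shape T"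
        hence "(i, Suc j) \<in> D (Suc k)" using sb I(2) by auto
        hence "(i, j) \<in> D (Suc k)" using dck(2) unfolding dclosed_def by (meson le_refl lessI less_imp_le)
        then show False using sb by simp
      qed
    qed
    interpret c: cdel T i j using I(1) cor by unfold_locales
    have cd: "col_del T (i, j) = (c.x, c.T')" by (rule c.CD)
    have stS: "st (Suc k) = (insert (c.x, Suc k) P, c.T')" using st_con[OF False] PT b cd by simp
    have xT: "c.x \<in> ent T" by (rule c.xT)
    have xs: "c.x \<notin> inv_support P" using xT I(3) by auto
    have ks: "Suc k \<notin> inv_support P" using suppk by auto
    have xk: "c.x < Suc k" using xT entk by auto
    have sh: "shape c.T' = D (Suc k)" using shape_col_del[OF I(1) cor] cd sb I(2) by simp
    have supp': "inv_support (insert (c.x, Suc k) P) = insert c.x (insert (Suc k) (inv_support P))"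
      by (auto simp: inv_support_def)
    have e': "ent c.T' = ent T - {c.x}" by (rule c.entT')
    have m': "matching (insert (c.x, Suc k) P)"
      unfolding matching_def
    proof (intro conjI ballI impI)
      fix p assume "p \<in> insert (c.x, Suc k) P"
      then show "fst p \<noteq> snd p" using I(6) xk unfolding matching_def by auto
    next
      fix p q assume p: "p \<in> insert (c.x, Suc k) P" and q: "q \<in> insert (c.x, Suc k) P"
        and sh: "fst p = fst q \<or> fst p = snd q \<or> snd p = fst q \<or> snd p = snd q"
      have notin: "\<And>p. p \<in> P \<Longrightarrow> fst p \<noteq> c.x \<and> snd p \<noteq> c.x \<and> fst p \<noteq> Suc k \<and> snd p \<noteq> Suc k"
        using xs ks unfolding inv_support_def by force
      show "p = q"
      proof (cases "p = (c.x, Suc k)")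
        case True
        show ?thesis
        proof (cases "q = (c.x, Suc k)")
          case False
          hence "q \<in> P" using q by simp
          then show ?thesis using notin[of q] sh True by auto
        qed (use True in simp)
      next
        case False
        hence pP: "p \<in> P" using p by simp
        show ?thesis
        proof (cases "q = (c.x, Suc k)")
          case True
          then show ?thesis using notin[OF pP] sh by auto
        next
          case False
          hence "q \<in> P" using q by simp
          then show ?thesis using I(6) pP sh unfolding matching_def by blast
        qed
      qed
    qed
    have u: "ent c.T' \<union> insert c.x (insert (Suc k) (inv_support P)) = {1..Suc k}"
    proof -
      have "ent c.T' \<union> insert c.x (insert (Suc k) (inv_support P)) = insert (Suc k) (ent T \<union> inv_support P)"
        using e' xT by auto
      then show ?thesis using I(4) by (simp add: atLeastAtMostSuc_conv)
    qed
    have d: "ent c.T' \<inter> insert c.x (insert (Suc k) (inv_support P)) = {}"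
      using e' I(3) entk by auto
    have p: "\<forall>(a, b)\<in>insert (c.x, Suc k) P. a < b \<and> b \<le> Suc k \<and> \<not> is_exp mus b \<and> is_exp mus a"
      using I(5) I(7) xk xT False by auto
    have i7: "\<forall>v\<in>ent c.T'. is_exp mus v" using I(7) e' by auto
    show ?thesis unfolding invk_def stS fst_conv snd_conv supp' using c.wfT' sh u d p m' i7 by blast
  qed
qed

lemma inv_all: "k \<le> r \<Longrightarrow> invk k"
  by (induction k) (auto intro: inv_0 inv_Suc)

end




context osc begin

lemma partner:
  assumes m: "matching P" and ab: "(a, b) \<in> P"
  shows "inv_partner P a = b \<and> inv_partner P b = a"
proof -
  have m1: "\<forall>p\<in>P. fst p \<noteq> snd p" and m2: "\<forall>p\<in>P. \<forall>q\<in>P. (fst p = fst q \<or> fst p = snd q \<or> snd p = fst q \<or> snd p = snd q) \<longrightarrow> p = q"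
    using m[unfolded matching_def] by auto
  have ne: "a \<noteq> b" using m1 ab by force
  have "inv_partner P a = b" unfolding inv_partner_def
  proof (rule the_equality)
    show "(a, b) \<in> P \<or> (b, a) \<in> P" using ab by simp
  next
    fix b' assume h: "(a, b') \<in> P \<or> (b', a) \<in> P"
    then show "b' = b"
    proof
      assume "(a, b') \<in> P" then show ?thesis using m2 ab by force
    next
      assume "(b', a) \<in> P"
      hence "(b', a) = (a, b)" using m2 ab by force
      then show ?thesis using ne by simp
    qed
  qed
  moreover have "inv_partner P b = a" unfolding inv_partner_def
  proof (rule the_equality)
    show "(b, a) \<in> P \<or> (a, b) \<in> P" using ab by simp
  next
    fix a' assume h: "(b, a') \<in> P \<or> (a', b) \<in> P"
    then show "a' = a"
    proof
      assume "(b, a') \<in> P"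
      hence "(b, a') = (a, b)" using m2 ab by force
      then show ?thesis using ne by simp
    next
      assume "(a', b) \<in> P" then show ?thesis using m2 ab by force
    qed
  qed
  ultimately show ?thesis by simp
qed

lemma partner_supp:
  assumes m: "matching P" and a: "a \<in> inv_support P"
  shows "inv_partner P a \<in> inv_support P \<and> inv_partner P (inv_partner P a) = a \<and> inv_partner P a \<noteq> a"
proof -
  have m1: "\<forall>p\<in>P. fst p \<noteq> snd p" using m[unfolded matching_def] by auto
  from a obtain p where p: "p \<in> P" "a = fst p \<or> a = snd p" unfolding inv_support_def by auto
  obtain u v where uv: "p = (u, v)" by (cases p)
  have "u \<noteq> v" using m1 p uv by force
  then show ?thesis using p uv partner[OF m, of u v] unfolding inv_support_def by (auto intro: rev_image_eqI)
qed

definition QD :: "nat list list \<Rightarrow> (nat \<Rightarrow> nat) \<Rightarrow> nat \<Rightarrow> bool" where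
  "QD T f k = (if k \<in> ent T \<and> Suc k \<in> ent T then Gp T k else if k \<in> ent T then True
     else if Suc k \<in> ent T then False else f (Suc k) < f k)"

lemma distinct_concat_map_rev: "distinct (concat (map rev L)) \<longleftrightarrow> distinct (concat L)"
proof (induction L)
  case Nil then show ?case by simp
next
  case (Cons c L)
  have "set (concat (map rev L)) = set (concat L)" by auto
  then show ?case using Cons by auto
qed

lemma Qchar:
  assumes w: "wft T" and m: "matching P" and fin: "finite (inv_support P)"
    and disj: "ent T \<inter> inv_support P = {}"
  defines "f \<equiv> inv_partner P"
  defines "w \<equiv> map f (sorted_list_of_set (inv_support P))"
  defines "I \<equiv> foldl (\<lambda>R x. row_ins x R) [] w"
  defines "Q \<equiv> foldl (\<lambda>S x. col_ins x S) T (concat (map rev I))"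
  shows "wft Q \<and> ent Q = ent T \<union> inv_support P \<and>
    (\<forall>k. k \<in> ent T \<union> inv_support P \<longrightarrow> Suc k \<in> ent T \<union> inv_support P \<longrightarrow> (Gp Q k \<longleftrightarrow> QD T f k))"
proof -
  let ?A = "inv_support P"
  define s where "s = sorted_list_of_set ?A"
  have ss: "sorted_wrt (<) s" "set s = ?A" "distinct s" using fin by (auto simp: s_def)
  have fA: "\<And>a. a \<in> ?A \<Longrightarrow> f a \<in> ?A \<and> f (f a) = a \<and> f a \<noteq> a" using partner_supp[OF m] f_def by blast
  have inj: "inj_on f ?A" by (metis fA inj_onI)
  have wd: "distinct w" using ss inj by (simp add: w_def s_def[symmetric] distinct_map)
  have wset: "set w = ?A"
  proof -
    have "set w = f ` ?A" using ss by (simp add: w_def s_def[symmetric])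
    also have "\<dots> = ?A"
    proof
      show "f ` ?A \<subseteq> ?A" using fA by auto
    next
      show "?A \<subseteq> f ` ?A"
      proof
        fix x assume x: "x \<in> ?A"
        then show "x \<in> f ` ?A" using fA[OF x] by (metis image_eqI)
      qed
    qed
    finally show ?thesis .
  qed
  have Ieq: "I = cfold [] w" unfolding I_def row_ins_eq ..
  have wI: "wft I" using cfold_wf[of "[]" w] wd Ieq by simp
  have eI: "ent I = ?A" using cfold_basic[of "[]" w] wd Ieq wset by simp
  define rrw where "rrw = concat (map rev I)"
  have rd: "distinct rrw" using wI wf_distinct distinct_concat_map_rev rrw_def by blast
  have rset: "set rrw = ?A" using eI by (auto simp: rrw_def tab_entries_def)
  have Qeq: "Q = cfold T rrw" unfolding Q_def rrw_def ..
  have dT: "distinct (concat T)" using w wf_distinct by blast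
  have wQ: "wft Q" using cfold_wf[OF w rd] rset disj Qeq by auto
  have eQ: "ent Q = ent T \<union> ?A" using cfold_basic[OF dT rd] rset disj Qeq by auto
  have G: "\<forall>k. k \<in> ent T \<union> ?A \<longrightarrow> Suc k \<in> ent T \<union> ?A \<longrightarrow> (Gp Q k \<longleftrightarrow> QD T f k)"
  proof (intro allI impI)
    fix k assume k: "k \<in> ent T \<union> ?A" and sk: "Suc k \<in> ent T \<union> ?A"
    have rd2: "set rrw \<inter> ent T = {}" using rset disj by auto
    have k': "k \<in> ent T \<union> set rrw" "Suc k \<in> ent T \<union> set rrw" using k sk rset by auto
    have g: "Gp Q k \<longleftrightarrow> (if k \<in> ent T \<and> Suc k \<in> ent T then Gp T k
       else if k \<in> ent T then True else if Suc k \<in> ent T then False else before rrw k (Suc k))"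
      unfolding Qeq by (rule cfold_G[OF dT rd rd2 k'])
    show "Gp Q k \<longleftrightarrow> QD T f k"
    proof (cases "k \<in> ent T \<or> Suc k \<in> ent T")
      case True then show ?thesis using g by (auto simp: QD_def)
    next
      case False
      hence kA: "k \<in> ?A" "Suc k \<in> ?A" using k sk by auto
      have rows: "\<forall>c\<in>set I. sorted_wrt (<) c" using wI wf_sorted by blast
      have b1: "before rrw k (Suc k) \<longleftrightarrow> colx k I < colx (Suc k) I"
        unfolding rrw_def by (rule before_concat_rev[OF rows wf_distinct[OF wI]]) (use kA eI in auto)
      have b2: "Gp I k \<longleftrightarrow> before w k (Suc k)"
        using cfold_G[of "[]" w k] wd kA wset Ieq by simp
      have b3: "before w k (Suc k) \<longleftrightarrow> f k < f (Suc k)"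
        unfolding w_def s_def[symmetric] by (rule before_map_sorted[OF ss(1)]) (use fA ss kA in auto)
      have "f k \<noteq> f (Suc k)" using inj kA by (metis fA n_not_Suc_n)
      hence "before rrw k (Suc k) \<longleftrightarrow> f (Suc k) < f k" using b1 b2 b3 unfolding Gp_def by auto
      then show ?thesis using g False by (simp add: QD_def)
    qed
  qed
  show ?thesis using wQ eQ G by simp
qed

end




context osc begin

abbreviation "bx k \<equiv> step_box mus k"

lemma invD:
  assumes "m \<le> r"
  shows "wft (Tk m)" "shape (Tk m) = D m" "ent (Tk m) \<inter> inv_support (Pk m) = {}"
     "ent (Tk m) \<union> inv_support (Pk m) = {1..m}"
     "\<forall>(a, b)\<in>Pk m. a < b \<and> b \<le> m \<and> \<not> is_exp mus b \<and> is_exp mus a" "matching (Pk m)"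
     "\<forall>v\<in>ent (Tk m). is_exp mus v"
  using inv_all[OF assms] unfolding invk_def by blast+

lemma P_step: "Pk m \<subseteq> Pk (Suc m)"
proof (cases "is_exp mus (Suc m)")
  case True
  have "Pk (Suc m) = Pk m" using st_exp[OF True] by simp
  then show ?thesis by simp
next
  case False
  have "Pk (Suc m) = insert (fst (col_del (Tk m) (bx (Suc m))), Suc m) (Pk m)" using st_con[OF False] by simp
  then show ?thesis by blast
qed

lemma P_mono: "k \<le> m \<Longrightarrow> Pk k \<subseteq> Pk m"
proof (induction m)
  case 0 then show ?case by simp
next
  case (Suc m)
  show ?case
  proof (cases "k = Suc m")
    case False
    hence "k \<le> m" using Suc.prems by simp
    then show ?thesis using Suc.IH P_step[of m] by blast
  qed simp
qed

lemma addable_step: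
  assumes "Suc k \<le> r" "is_exp mus (Suc k)"
  shows "addable (Tk k) (fst (bx (Suc k))) (snd (bx (Suc k)))"
proof -
  obtain i j where b: "bx (Suc k) = (i, j)" by (metis surj_pair)
  have sh: "shape (Tk k) = D k" using invD assms by simp
  have dck: "dclosed (D (Suc k))" using dcD assms(1) by simp
  have sb: "(i, j) \<notin> D k" "D (Suc k) = insert (i, j) (D k)" using step_exp[OF assms] b by auto
  have ij: "(i, j) \<in> D (Suc k)" using sb by simp
  have "addable (Tk k) i j" unfolding addable_def
  proof (intro conjI impI)
    show "(i, j) \<notin> shape (Tk k)" using sb sh by simp
  next
    assume "0 < i"
    have "(i - 1, j) \<in> D (Suc k)" using dck ij unfolding dclosed_def by (meson diff_le_self order_refl)
    then show "(i - 1, j) \<in> shape (Tk k)" using sb sh \<open>0 < i\<close> by auto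
  next
    assume "0 < j"
    have "(i, j - 1) \<in> D (Suc k)" using dck ij unfolding dclosed_def by (meson diff_le_self order_refl)
    then show "(i, j - 1) \<in> shape (Tk k)" using sb sh \<open>0 < j\<close> by auto
  qed
  then show ?thesis using b by simp
qed

lemma corner_step:
  assumes "Suc k \<le> r" "\<not> is_exp mus (Suc k)"
  shows "corner (Tk k) (fst (bx (Suc k))) (snd (bx (Suc k)))"
proof -
  obtain i j where b: "bx (Suc k) = (i, j)" by (metis surj_pair)
  have sh: "shape (Tk k) = D k" using invD assms by simp
  have dck: "dclosed (D (Suc k))" using dcD assms(1) by simp
  have sb: "(i, j) \<in> D k" "D (Suc k) = D k - {(i, j)}" using step_con[OF assms] b by auto
  have "corner (Tk k) i j"
  proof (rule corner_of_shape)
    show "(i, j) \<in> shape (Tk k)" using sb sh by simp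
  next
    show "(Suc i, j) \<notin> shape (Tk k)"
    proof
      assume "(Suc i, j) \<in> shape (Tk k)"
      hence "(Suc i, j) \<in> D (Suc k)" using sb sh by auto
      hence "(i, j) \<in> D (Suc k)" using dck unfolding dclosed_def by (meson le_refl lessI less_imp_le)
      then show False using sb by simp
    qed
  next
    show "(i, Suc j) \<notin> shape (Tk k)"
    proof
      assume "(i, Suc j) \<in> shape (Tk k)"
      hence "(i, Suc j) \<in> D (Suc k)" using sb sh by auto
      hence "(i, j) \<in> D (Suc k)" using dck unfolding dclosed_def by (meson le_refl lessI less_imp_le)
      then show False using sb by simp
    qed
  qed
  then show ?thesis using b by simp
qed

lemma con_pair:
  assumes "Suc k \<le> r" "\<not> is_exp mus (Suc k)"
  shows "(fst (col_del (Tk k) (bx (Suc k))), Suc k) \<in> Pk r"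
proof -
  have "(fst (col_del (Tk k) (bx (Suc k))), Suc k) \<in> Pk (Suc k)" using st_con[OF assms(2)] by simp
  then show ?thesis using P_mono[OF assms(1)] by blast
qed

lemma supp_le: "m \<le> r \<Longrightarrow> a \<in> inv_support (Pk m) \<Longrightarrow> inv_partner (Pk m) a \<le> m"
proof -
  assume m: "m \<le> r" and a: "a \<in> inv_support (Pk m)"
  have "inv_partner (Pk m) a \<in> inv_support (Pk m)" using partner_supp[OF invD(6)[OF m] a] by simp
  then show ?thesis using invD(4)[OF m] by auto
qed

lemma exp_partner:
  assumes m: "m \<le> r" and a: "a \<in> inv_support (Pk m)" and e: "is_exp mus a"
  shows "a < inv_partner (Pk m) a"
proof -
  obtain p where p: "p \<in> Pk m" "a = fst p \<or> a = snd p" using a unfolding inv_support_def by auto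
  obtain u v where uv: "p = (u, v)" by (cases p)
  have props: "u < v" "\<not> is_exp mus v" using invD(5)[OF m] p uv by auto
  hence "a = u" using p uv e by auto
  then show ?thesis using partner[OF invD(6)[OF m]] p uv props by auto
qed

lemma ent_exp: "m \<le> r \<Longrightarrow> v \<in> ent (Tk m) \<Longrightarrow> is_exp mus v" using invD(7) by blast

lemma partner_stable:
  assumes "m \<le> r" "a \<in> inv_support (Pk k)" "k \<le> m"
  shows "inv_partner (Pk m) a = inv_partner (Pk k) a"
proof -
  have k: "k \<le> r" using assms by simp
  obtain p where p: "p \<in> Pk k" "a = fst p \<or> a = snd p" using assms(2) unfolding inv_support_def by auto
  obtain u v where uv: "p = (u, v)" by (cases p)
  have pm: "p \<in> Pk m" using P_mono[OF assms(3)] p by blast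
  show ?thesis using partner[OF invD(6)[OF k]] partner[OF invD(6)[OF assms(1)]] p pm uv by auto
qed

lemma ent_range: "m \<le> r \<Longrightarrow> v \<in> ent (Tk m) \<Longrightarrow> 1 \<le> v \<and> v \<le> m"
  using invD(4) by fastforce

lemma supp_range: "m \<le> r \<Longrightarrow> v \<in> inv_support (Pk m) \<Longrightarrow> 1 \<le> v \<and> v \<le> m"
  using invD(4) by fastforce

lemma cover: "m \<le> r \<Longrightarrow> 1 \<le> v \<Longrightarrow> v \<le> m \<Longrightarrow> v \<in> ent (Tk m) \<or> v \<in> inv_support (Pk m)"
  using invD(4) by (metis UnE atLeastAtMost_iff)

lemma con_partner:
  assumes "Suc k \<le> r" "\<not> is_exp mus (Suc k)"
  shows "inv_partner (Pk r) (Suc k) = fst (col_del (Tk k) (bx (Suc k)))"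
  using partner[OF invD(6)[OF order_refl] con_pair[OF assms]] by simp

lemma EC:
  assumes "1 \<le> k" "Suc k \<le> r" "is_exp mus k" "\<not> is_exp mus (Suc k)"
  shows "QD (Tk r) (inv_partner (Pk r)) k"
proof -
  have nsk: "Suc k \<notin> ent (Tk r)" using ent_exp assms(4) by blast
  show ?thesis
  proof (cases "k \<in> ent (Tk r)")
    case True then show ?thesis using nsk by (simp add: QD_def)
  next
    case False
    have kA: "k \<in> inv_support (Pk r)" using cover[of r k] False assms by simp
    have "k < inv_partner (Pk r) k" using exp_partner[OF order_refl kA assms(3)] .
    moreover have "inv_partner (Pk r) (Suc k) < Suc k"
    proof -
      obtain i j where b: "bx (Suc k) = (i, j)" by (metis surj_pair)
      have cor: "corner (Tk k) i j" using corner_step[OF assms(2,4)] b by simp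
      interpret c: cdel "Tk k" i j using invD(1)[of k] assms(2) cor by unfold_locales simp_all
      have "inv_partner (Pk r) (Suc k) = c.x" using con_partner[OF assms(2,4)] b c.CD by simp
      moreover have "c.x \<in> ent (Tk k)" by (rule c.xT)
      ultimately show ?thesis using ent_range[of k] assms(2) by fastforce
    qed
    ultimately show ?thesis using False nsk by (simp add: QD_def)
  qed
qed

lemma CE:
  assumes "1 \<le> k" "Suc k \<le> r" "\<not> is_exp mus k" "is_exp mus (Suc k)"
  shows "\<not> QD (Tk r) (inv_partner (Pk r)) k"
proof -
  have nk: "k \<notin> ent (Tk r)" using ent_exp assms(3) by blast
  show ?thesis
  proof (cases "Suc k \<in> ent (Tk r)")
    case True then show ?thesis using nk by (simp add: QD_def)
  next
    case False
    have kA: "Suc k \<in> inv_support (Pk r)" using cover[of r "Suc k"] False assms by simp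
    have "Suc k < inv_partner (Pk r) (Suc k)" using exp_partner[OF order_refl kA assms(4)] .
    moreover have "inv_partner (Pk r) k < k"
    proof -
      obtain k0 where k0: "k = Suc k0" using assms(1) by (cases k) auto
      obtain i j where b: "bx k = (i, j)" by (metis surj_pair)
      have cor: "corner (Tk k0) i j" using corner_step[of k0] assms k0 b by simp
      interpret c: cdel "Tk k0" i j using invD(1)[of k0] assms(2) k0 cor by unfold_locales simp_all
      have "inv_partner (Pk r) k = c.x" using con_partner[of k0] assms k0 b c.CD by simp
      moreover have "c.x \<in> ent (Tk k0)" by (rule c.xT)
      ultimately show ?thesis using ent_range[of k0] assms(2) k0 by fastforce
    qed
    ultimately show ?thesis using False nk by (simp add: QD_def)
  qed
qed

lemma CC:
  assumes "1 \<le> k" "Suc k \<le> r" "\<not> is_exp mus k" "\<not> is_exp mus (Suc k)"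
  shows "QD (Tk r) (inv_partner (Pk r)) k \<longleftrightarrow> fst (bx (Suc k)) < fst (bx k)"
proof -
  have nk: "k \<notin> ent (Tk r)" "Suc k \<notin> ent (Tk r)" using ent_exp assms(3,4) by blast+
  obtain k0 where k0: "k = Suc k0" using assms(1) by (cases k) auto
  obtain i j where b: "bx k = (i, j)" by (metis surj_pair)
  obtain i' j' where b': "bx (Suc k) = (i', j')" by (metis surj_pair)
  have w0: "wft (Tk k0)" using invD(1)[of k0] assms(2) k0 by simp
  have cor: "corner (Tk k0) i j" using corner_step[of k0] assms k0 b by simp
  have Tk: "Tk k = snd (col_del (Tk k0) (i, j))" using st_con[of k0] assms(3) k0 b by simp
  have cor': "corner (snd (col_del (Tk k0) (i, j))) i' j'" using corner_step[of k] assms b' Tk by simp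
  have p1: "inv_partner (Pk r) k = fst (col_del (Tk k0) (i, j))" using con_partner[of k0] assms k0 b by simp
  have p2: "inv_partner (Pk r) (Suc k) = fst (col_del (snd (col_del (Tk k0) (i, j))) (i', j'))"
    using con_partner[of k] assms b' Tk by simp
  have "QD (Tk r) (inv_partner (Pk r)) k \<longleftrightarrow> inv_partner (Pk r) (Suc k) < inv_partner (Pk r) k"
    using nk by (simp add: QD_def)
  also have "\<dots> \<longleftrightarrow> i' < i" using L3[OF w0 cor cor'] p1 p2 by simp
  finally show ?thesis using b b' by simp
qed

lemma EE_base:
  assumes "1 \<le> k" "Suc k \<le> r" "is_exp mus k" "is_exp mus (Suc k)"
  shows "QD (Tk (Suc k)) (inv_partner (Pk (Suc k))) k \<longleftrightarrow> fst (bx k) < fst (bx (Suc k))"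
proof -
  obtain k0 where k0: "k = Suc k0" using assms(1) by (cases k) auto
  have ad1: "addable (Tk k0) (fst (bx k)) (snd (bx k))" using addable_step[of k0] assms k0 by simp
  have w0: "wft (Tk k0)" using invD(1)[of k0] assms(2) k0 by simp
  have big0: "\<forall>v\<in>ent (Tk k0). v < k" using ent_range[of k0] assms(2) k0 by fastforce
  have T1: "Tk k = place (Tk k0) (fst (bx k), snd (bx k)) k" using st_exp[of k0] assms(3) k0 by simp
  have pf1: "wft (Tk k) \<and> ent (Tk k) = insert k (ent (Tk k0)) \<and> rowx (Tk k) k = fst (bx k)"
    using place_facts[OF w0 ad1 big0] T1 by simp
  have ad2: "addable (Tk k) (fst (bx (Suc k))) (snd (bx (Suc k)))" using addable_step[of k] assms by simp
  have big1: "\<forall>v\<in>ent (Tk k). v < Suc k" using ent_range[of k] assms(2) by fastforce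
  have T2: "Tk (Suc k) = place (Tk k) (fst (bx (Suc k)), snd (bx (Suc k))) (Suc k)" using st_exp[of k] assms(4) by simp
  have pf2: "wft (Tk (Suc k)) \<and> ent (Tk (Suc k)) = insert (Suc k) (ent (Tk k)) \<and>
      rowx (Tk (Suc k)) (Suc k) = fst (bx (Suc k)) \<and> rowx (Tk (Suc k)) k = rowx (Tk k) k"
    using place_facts[OF pf1[THEN conjunct1] ad2 big1] T2 pf1 by simp
  have ins: "k \<in> ent (Tk (Suc k))" "Suc k \<in> ent (Tk (Suc k))" using pf1 pf2 by auto
  have "Gp (Tk (Suc k)) k \<longleftrightarrow> rowx (Tk (Suc k)) k < rowx (Tk (Suc k)) (Suc k)"
    unfolding Gp_def by (rule dichotomy) (use pf2 ins in auto)
  then show ?thesis using ins pf1 pf2 by (simp add: QD_def)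
qed

lemma EE_step:
  assumes "1 \<le> k" "Suc k \<le> m" "Suc m \<le> r"
  shows "QD (Tk (Suc m)) (inv_partner (Pk (Suc m))) k \<longleftrightarrow> QD (Tk m) (inv_partner (Pk m)) k"
proof -
  have mr: "m \<le> r" using assms by simp
  have cov: "k \<in> ent (Tk m) \<or> k \<in> inv_support (Pk m)" "Suc k \<in> ent (Tk m) \<or> Suc k \<in> inv_support (Pk m)"
    using cover[OF mr] assms by auto
  have disj: "ent (Tk m) \<inter> inv_support (Pk m) = {}" using invD(3)[OF mr] .
  have stab: "\<And>a. a \<in> inv_support (Pk m) \<Longrightarrow> inv_partner (Pk (Suc m)) a = inv_partner (Pk m) a"
    using partner_stable[of "Suc m" _ m] assms by simp
  have le: "\<And>a. a \<in> inv_support (Pk m) \<Longrightarrow> inv_partner (Pk m) a \<le> m" using supp_le[OF mr] by blast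
  show ?thesis
  proof (cases "is_exp mus (Suc m)")
    case True
    have ad: "addable (Tk m) (fst (bx (Suc m))) (snd (bx (Suc m)))" using addable_step[of m] assms True by simp
    have big: "\<forall>v\<in>ent (Tk m). v < Suc m" using ent_range[OF mr] by fastforce
    have T2: "Tk (Suc m) = place (Tk m) (fst (bx (Suc m)), snd (bx (Suc m))) (Suc m)" using st_exp[of m] True by simp
    have P2: "Pk (Suc m) = Pk m" using st_exp[of m] True by simp
    have pf: "ent (Tk (Suc m)) = insert (Suc m) (ent (Tk m)) \<and> (\<forall>v\<in>ent (Tk m). colx v (Tk (Suc m)) = colx v (Tk m))"
      using place_facts[OF invD(1)[OF mr] ad big] T2 by simp
    have n1: "k \<noteq> Suc m" "Suc k \<noteq> Suc m" using assms by auto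
    have "(k \<in> ent (Tk (Suc m))) = (k \<in> ent (Tk m))" "(Suc k \<in> ent (Tk (Suc m))) = (Suc k \<in> ent (Tk m))"
      using pf n1 by auto
    moreover have "k \<in> ent (Tk m) \<Longrightarrow> Suc k \<in> ent (Tk m) \<Longrightarrow> Gp (Tk (Suc m)) k = Gp (Tk m) k"
      using pf unfolding Gp_def by simp
    ultimately show ?thesis using P2 by (auto simp: QD_def)
  next
    case False
    obtain i j where b: "bx (Suc m) = (i, j)" by (metis surj_pair)
    have cor: "corner (Tk m) i j" using corner_step[of m] assms False b by simp
    interpret c: cdel "Tk m" i j using invD(1)[OF mr] cor by unfold_locales
    have T2: "Tk (Suc m) = c.T'" and P2: "Pk (Suc m) = insert (c.x, Suc m) (Pk m)"
      using st_con[of m] False b c.CD by simp_all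
    have xT: "c.x \<in> ent (Tk m)" by (rule c.xT)
    have e2: "ent c.T' = ent (Tk m) - {c.x}" by (rule c.entT')
    have px: "inv_partner (Pk (Suc m)) c.x = Suc m"
      using partner[OF invD(6)[OF assms(3)], of c.x "Suc m"] P2 by simp
    have gpv: "\<And>v. v \<noteq> c.x \<Longrightarrow> c.gp v = int (colx v c.T')" by (simp add: c.gp_def)
    have gpx: "c.gp c.x = -1" by (simp add: c.gp_def)
    let ?f = "inv_partner (Pk m)" and ?f' = "inv_partner (Pk (Suc m))"
    consider "k \<in> ent (Tk m) \<and> Suc k \<in> ent (Tk m)" | "k \<in> ent (Tk m) \<and> Suc k \<notin> ent (Tk m)"
      | "k \<notin> ent (Tk m) \<and> Suc k \<in> ent (Tk m)" | "k \<notin> ent (Tk m) \<and> Suc k \<notin> ent (Tk m)" by blast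
    then show ?thesis
    proof cases
      case 1
      have dg: "(c.gp (Suc k) \<le> c.gp k) \<longleftrightarrow> Gp (Tk m) k" using c.delG 1 unfolding Gp_def by blast
      show ?thesis
      proof (cases "c.x = k")
        case True
        have "\<not> Gp (Tk m) k" using dg gpx gpv[of "Suc k"] True by simp
        moreover have "k \<notin> ent c.T'" "Suc k \<in> ent c.T'" using e2 1 True by auto
        ultimately show ?thesis using 1 T2 by (simp add: QD_def)
      next
        case xk: False
        show ?thesis
        proof (cases "c.x = Suc k")
          case True
          have "Gp (Tk m) k" using dg gpx gpv[of k] True xk by simp
          moreover have "k \<in> ent c.T'" "Suc k \<notin> ent c.T'" using e2 1 True xk by auto
          ultimately show ?thesis using 1 T2 by (simp add: QD_def)
        next
          case False
          have "Gp c.T' k \<longleftrightarrow> Gp (Tk m) k" using dg gpv[of k] gpv[of "Suc k"] xk False unfolding Gp_def by simp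
          moreover have "k \<in> ent c.T'" "Suc k \<in> ent c.T'" using e2 1 xk False by auto
          ultimately show ?thesis using 1 T2 by (simp add: QD_def)
        qed
      qed
    next
      case 2
      have skA: "Suc k \<in> inv_support (Pk m)" using cov 2 by simp
      have "QD (Tk m) ?f k" using 2 by (simp add: QD_def)
      moreover have "QD c.T' ?f' k"
      proof (cases "c.x = k")
        case True
        have "k \<notin> ent c.T'" "Suc k \<notin> ent c.T'" using e2 2 True by auto
        moreover have "?f' (Suc k) < ?f' k" using px True stab[OF skA] le[OF skA] by simp
        ultimately show ?thesis by (simp add: QD_def)
      next
        case False
        hence "k \<in> ent c.T'" "Suc k \<notin> ent c.T'" using e2 2 by auto
        then show ?thesis by (simp add: QD_def)
      qed
      ultimately show ?thesis using T2 by simp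
    next
      case 3
      have kA: "k \<in> inv_support (Pk m)" using cov 3 by simp
      have "\<not> QD (Tk m) ?f k" using 3 by (simp add: QD_def)
      moreover have "\<not> QD c.T' ?f' k"
      proof (cases "c.x = Suc k")
        case True
        have "k \<notin> ent c.T'" "Suc k \<notin> ent c.T'" using e2 3 True by auto
        moreover have "\<not> ?f' (Suc k) < ?f' k" using px True stab[OF kA] le[OF kA] by simp
        ultimately show ?thesis by (simp add: QD_def)
      next
        case False
        hence "Suc k \<in> ent c.T'" "k \<notin> ent c.T'" using e2 3 by auto
        then show ?thesis by (simp add: QD_def)
      qed
      ultimately show ?thesis using T2 by simp
    next
      case 4
      have A: "k \<in> inv_support (Pk m)" "Suc k \<in> inv_support (Pk m)" using cov 4 by auto
      have "k \<notin> ent c.T'" "Suc k \<notin> ent c.T'" using e2 4 by auto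
      then show ?thesis using 4 T2 stab[OF A(1)] stab[OF A(2)] by (simp add: QD_def)
    qed
  qed
qed

lemma EE:
  assumes "1 \<le> k" "Suc k \<le> r" "is_exp mus k" "is_exp mus (Suc k)"
  shows "Suc k \<le> m \<Longrightarrow> m \<le> r \<Longrightarrow> QD (Tk m) (inv_partner (Pk m)) k \<longleftrightarrow> fst (bx k) < fst (bx (Suc k))"
proof (induction m)
  case 0 then show ?case by simp
next
  case (Suc m)
  show ?case
  proof (cases "Suc k = Suc m")
    case True then show ?thesis using EE_base[OF assms] by simp
  next
    case False
    hence "Suc k \<le> m" using Suc.prems by simp
    then show ?thesis using Suc.IH Suc.prems EE_step[OF assms(1) _ Suc.prems(2)] by simp
  qed
qed

theorem main: "osc_Des mus = tab_Des (sundaram_Q mus)"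
proof -
  obtain P T where PT: "st r = (P, T)" by (metis surj_pair)
  have wT: "wft T" and mP: "matching P" and dj: "ent T \<inter> inv_support P = {}"
    and cv: "ent T \<union> inv_support P = {1..r}" using invD[OF order_refl] PT by auto
  have fin: "finite (inv_support P)" using cv by (metis finite_Un finite_atLeastAtMost)
  define f where "f = inv_partner P"
  define w where "w = map f (sorted_list_of_set (inv_support P))"
  define I where "I = foldl (\<lambda>R x. row_ins x R) [] w"
  define Q where "Q = foldl (\<lambda>S x. col_ins x S) T (concat (map rev I))"
  have SQ: "sundaram_Q mus = Q"
    unfolding sundaram_Q_def part1 PT Q_def I_def w_def f_def by (simp add: Let_def)
  have qc: "wft Q \<and> ent Q = ent T \<union> inv_support P \<and>
    (\<forall>k. k \<in> ent T \<union> inv_support P \<longrightarrow> Suc k \<in> ent T \<union> inv_support P \<longrightarrow> (Gp Q k \<longleftrightarrow> QD T f k))"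
    using Qchar[OF wT mP fin dj] unfolding Q_def I_def w_def f_def .
  have wQ: "wft Q" and eQ: "ent Q = {1..r}" using qc cv by auto
  have GQ: "\<And>k. 1 \<le> k \<Longrightarrow> Suc k \<le> r \<Longrightarrow> Gp Q k \<longleftrightarrow> QD T f k" using qc cv by auto
  have TD: "\<And>k. k \<in> tab_Des Q \<longleftrightarrow> 1 \<le> k \<and> Suc k \<le> r \<and> Gp Q k"
  proof -
    fix k
    show "k \<in> tab_Des Q \<longleftrightarrow> 1 \<le> k \<and> Suc k \<le> r \<and> Gp Q k"
    proof (cases "1 \<le> k \<and> Suc k \<le> r")
      case True
      hence ins: "k \<in> ent Q" "Suc k \<in> ent Q" using eQ by auto
      have "tab_row Q k < tab_row Q (Suc k) \<longleftrightarrow> rowx Q k < rowx Q (Suc k)"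
        using tab_row_eq[OF wQ ins(1)] tab_row_eq[OF wQ ins(2)] by simp
      also have "\<dots> \<longleftrightarrow> Gp Q k" unfolding Gp_def using dichotomy[OF wQ ins] by simp
      finally show ?thesis using True ins by (simp add: tab_Des_def)
    next
      case False
      hence "\<not> (k \<in> ent Q \<and> Suc k \<in> ent Q)" using eQ by auto
      then show ?thesis using False by (auto simp: tab_Des_def)
    qed
  qed
  have TT: "Tk r = T" "Pk r = P" using PT by auto
  have key: "\<And>k. 1 \<le> k \<Longrightarrow> Suc k \<le> r \<Longrightarrow>
     ((is_exp mus k \<and> \<not> is_exp mus (Suc k)) \<or>
      (is_exp mus k \<and> is_exp mus (Suc k) \<and> fst (bx k) < fst (bx (Suc k))) \<or>
      (\<not> is_exp mus k \<and> \<not> is_exp mus (Suc k) \<and> fst (bx k) > fst (bx (Suc k)))) \<longleftrightarrow> QD T f k"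
  proof -
    fix k assume k: "1 \<le> k" "Suc k \<le> r"
    consider "is_exp mus k \<and> \<not> is_exp mus (Suc k)" | "is_exp mus k \<and> is_exp mus (Suc k)"
      | "\<not> is_exp mus k \<and> is_exp mus (Suc k)" | "\<not> is_exp mus k \<and> \<not> is_exp mus (Suc k)" by blast
    then show "((is_exp mus k \<and> \<not> is_exp mus (Suc k)) \<or>
      (is_exp mus k \<and> is_exp mus (Suc k) \<and> fst (bx k) < fst (bx (Suc k))) \<or>
      (\<not> is_exp mus k \<and> \<not> is_exp mus (Suc k) \<and> fst (bx k) > fst (bx (Suc k)))) \<longleftrightarrow> QD T f k"
    proof cases
      case 1 then show ?thesis using EC[OF k] TT f_def by simp
    next
      case 2 then show ?thesis using EE[OF k _ _ k(2) order_refl] TT f_def by simp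
    next
      case 3 then show ?thesis using CE[OF k] TT f_def by simp
    next
      case 4 then show ?thesis using CC[OF k] TT f_def by simp
    qed
  qed
  show ?thesis
  proof (rule set_eqI)
    fix k
    show "k \<in> osc_Des mus \<longleftrightarrow> k \<in> tab_Des (sundaram_Q mus)"
    proof (cases "1 \<le> k \<and> Suc k \<le> r")
      case True
      then show ?thesis using key[of k] TD[of k] GQ[of k] SQ lenmus by (simp add: osc_Des_def)
    next
      case False
      then show ?thesis using TD[of k] SQ lenmus by (auto simp: osc_Des_def)
    qed
  qed
qed

end

theorem theorem6p1:
  fixes r :: nat and mus :: "nat list list"
  assumes "osc_tableau r mus"
  shows "osc_Des mus = tab_Des (sundaram_Q mus)"
proof -
  interpret osc r mus using assms by unfold_locales
  show ?thesis by (rule main)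
qed


end
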